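(* Let $n>d$, $\mathbf X\in\mathbb R^{n\times d}$ fixed with full column rank, $1\le k<d$, and $\mathbf y\sim\mathcal N(\mathbf X\boldsymbol\beta,\sigma^2\mathbf I_n)$. Let $\hat{\boldsymbol\beta}_{\mathrm{OLS}}=(\mathbf X^T\mathbf X)^{-1}\mathbf X^T\mathbf y$ and let $$F(\mathbf y)=\frac{(\|\mathbf y-\mathbf P_{-1:k}\mathbf y\|^2-\|\mathbf y-\mathbf P\mathbf y\|^2)/k}{\|\mathbf y-\mathbf P\mathbf y\|^2/(n-d)}$$ be the $F$-test statistic for $H_{1:k}:\boldsymbol\beta_{1:k}=\mathbf 0$, with $F$-test p-value $p_F(\mathbf y)=\mathbb P(F_{k,n-d}\ge F(\mathbf y))$, where $F_{k,n-d}$ has the $F$-distribution with $(k,n-d)$ degrees of freedom. Let $\tilde{\mathbf u}$ be uniform on $\mathbb S^{n-d+k-1}$ independent of $\mathbf y$ and $\tilde{\mathbf y}=\hat{\mathbf y}_{1:k}+\hat\sigma_{1:k}\mathbf V\tilde{\mathbf u}$ (so that, under $H_{1:k}$, $\tilde{\mathbf y}$ has the conditional law of $\mathbf y$ given $\mathbf S^{(1:k)}=(\mathbf X_{-1:k}^T\mathbf y,\mathbf y^T\mathbf y)$). Then the $F$-test is equivalent to the test that rejects for large values of $\|\mathbf V_{1:k}^T\mathbf X_{1:k}\hat{\boldsymbol\beta}_{1:k,\mathrm{OLS}}\|$ conditional on $\mathbf S^{(1:k)}$, and also to the conditional test rejecting for large values of $\|\mathbf u_{1:k}\|$; that is, almost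 surely, $$p_F(\mathbf y)=\mathbb P\big(\|\mathbf V_{1:k}^T\mathbf X_{1:k}\hat{\boldsymbol\beta}_{1:k,\mathrm{OLS}}(\tilde{\mathbf y})\|\ge\|\mathbf V_{1:k}^T\mathbf X_{1:k}\hat{\boldsymbol\beta}_{1:k,\mathrm{OLS}}(\mathbf y)\|\,\big|\,\mathbf y\big)=\mathbb P\big(\|\tilde{\mathbf u}_{1:k}\|\ge\|\mathbf u_{1:k}\|\,\big|\,\mathbf y\big).$$
   Context: $\mathbf A_i$, $\mathbf A_{1:i}$, $\mathbf A_{-1:i}$ denote the $i$-th column, first $i$ columns, and submatrix with first $i$ columns removed (similarly for vectors). $\mathbf P$ is the orthogonal projection onto the column space of $\mathbf X$, and $\mathbf P_{-1:i}$ onto that of $\mathbf X_{-1:i}$. $\mathbf V\in\mathbb R^{n\times(n-d+k)}$ has orthonormal columns spanning the orthogonal complement of the column space of $\mathbf X_{-1:k}$, with first $k$ columns $\mathbf V_i=(\mathbf I-\mathbf P_{-1:i})\mathbf X_i/\|(\mathbf I-\mathbf P_{-1:i})\mathbf X_i\|$. $\hat{\mathbf y}_{1:k}=\mathbf P_{-1:k}\mathbf y$, $\hat\sigma_{1:k}=\|(\mathbf I-\mathbf P_{-1:k})\mathbf y\|$, $\mathbf u=\mathbf V^T(\mathbf y-\hat{\mathbf y}_{1:k})/\hat\sigma_{1:k}$. The precise "equality of p-values" formulation is our rendering of the paper's statement that the tests are equivalent. *)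

theory Defs
  imports "HOL-Probability.Probability"
begin

text \<open>Vectors in R^n are functions nat => real, only the coordinates 0..n-1 matter.
  Matrices are functions nat => nat => real (row index, column index).
  Indices are 0-based: column j of the paper is column j-1 here.\<close>

definition ipn :: "nat \<Rightarrow> (nat \<Rightarrow> real) \<Rightarrow> (nat \<Rightarrow> real) \<Rightarrow> real" where
  "ipn n x y = (\<Sum>i<n. x i * y i)"

definition nrm :: "nat \<Rightarrow> (nat \<Rightarrow> real) \<Rightarrow> real" where
  "nrm n x = sqrt (ipn n x x)"

definition col :: "(nat \<Rightarrow> nat \<Rightarrow> real) \<Rightarrow> nat \<Rightarrow> nat \<Rightarrow> real" where
  "col A j = (\<lambda>i. A i j)"

definition colspace :: "nat \<Rightarrow> (nat \<Rightarrow> nat \<Rightarrow> real) \<Rightarrow> nat set \<Rightarrow> (nat \<Rightarrow> real) set" where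
  "colspace n A J = {v. \<exists>c. \<forall>i<n. v i = (\<Sum>j\<in>J. c j * A i j)}"

definition orth_compl :: "nat \<Rightarrow> (nat \<Rightarrow> real) set \<Rightarrow> (nat \<Rightarrow> real) set" where
  "orth_compl n S = {v. \<forall>w\<in>S. ipn n v w = 0}"

definition proj :: "nat \<Rightarrow> (nat \<Rightarrow> nat \<Rightarrow> real) \<Rightarrow> nat set \<Rightarrow> (nat \<Rightarrow> real) \<Rightarrow> nat \<Rightarrow> real" where
  "proj n A J y = (THE p. (\<forall>i\<ge>n. p i = 0) \<and> p \<in> colspace n A J \<and>
                      (\<forall>w\<in>colspace n A J. ipn n (\<lambda>i. y i - p i) w = 0))"

definition matinv :: "nat \<Rightarrow> (nat \<Rightarrow> nat \<Rightarrow> real) \<Rightarrow> nat \<Rightarrow> nat \<Rightarrow> real" where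
  "matinv d G = (THE H. (\<forall>i<d. \<forall>j<d. (\<Sum>l<d. H i l * G l j) = (if i = j then 1 else 0)) \<and>
                        (\<forall>i<d. \<forall>j<d. (\<Sum>l<d. G i l * H l j) = (if i = j then 1 else 0)) \<and>
                        (\<forall>i j. d \<le> i \<or> d \<le> j \<longrightarrow> H i j = 0))"

definition ols :: "nat \<Rightarrow> nat \<Rightarrow> (nat \<Rightarrow> nat \<Rightarrow> real) \<Rightarrow> (nat \<Rightarrow> real) \<Rightarrow> nat \<Rightarrow> real" where
  "ols n d X y = (\<lambda>j. \<Sum>l<d. matinv d (\<lambda>a b. \<Sum>i<n. X i a * X i b) j l * (\<Sum>i<n. X i l * y i))"

definition full_col_rank :: "nat \<Rightarrow> nat \<Rightarrow> (nat \<Rightarrow> nat \<Rightarrow> real) \<Rightarrow> bool" where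
  "full_col_rank n d X \<longleftrightarrow> (\<forall>c. (\<forall>i<n. (\<Sum>j<d. c j * X i j) = 0) \<longrightarrow> (\<forall>j<d. c j = 0))"

definition Leb :: "nat \<Rightarrow> (nat \<Rightarrow> real) measure" where
  "Leb m = PiM {..<m} (\<lambda>_. lborel)"

definition gauss :: "nat \<Rightarrow> (nat \<Rightarrow> real) \<Rightarrow> real \<Rightarrow> (nat \<Rightarrow> real) measure" where
  "gauss n mu \<sigma> = PiM {..<n} (\<lambda>i. density lborel (normal_density (mu i) \<sigma>))"

text \<open>Uniform (normalized surface) measure on the unit sphere S^{m-1} in R^m, defined as the
  cone measure: sigma(A) = Leb({t u : u in A, 0 <= t <= 1}) / Leb(unit ball), i.e. the image of
  the uniform distribution on the unit ball under x |-> x / |x|.\<close>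
definition unif_sphere :: "nat \<Rightarrow> (nat \<Rightarrow> real) measure" where
  "unif_sphere m = distr (uniform_measure (Leb m) {x \<in> space (Leb m). nrm m x \<le> 1}) (Leb m)
                        (\<lambda>x. restrict (\<lambda>i. x i / nrm m x) {..<m})"

definition F_density :: "nat \<Rightarrow> nat \<Rightarrow> real \<Rightarrow> real" where
  "F_density k m x = (if 0 < x then
      (real k / real m) powr (real k / 2) * x powr (real k / 2 - 1)
      * (1 + real k * x / real m) powr (- (real k + real m) / 2) / Beta (real k / 2) (real m / 2)
    else 0)"

definition F_dist :: "nat \<Rightarrow> nat \<Rightarrow> real measure" where
  "F_dist k m = density lborel (F_density k m)"

end

theory Submission imports Defs "Jordan_Normal_Form.Determinant" begin

lemma ipn_comm: "ipn n x y = ipn n y x" by (simp add: ipn_def mult.commute)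
lemma ipn_nonneg: "0 \<le> ipn n x x" by (simp add: ipn_def sum_nonneg)
lemma ipn_zero_iff: "ipn n x x = 0 \<longleftrightarrow> (\<forall>i<n. x i = 0)"
  unfolding ipn_def by (subst sum_nonneg_eq_0_iff) auto
lemma ipn_cong: "(\<And>i. i<n \<Longrightarrow> x i = x' i) \<Longrightarrow> (\<And>i. i<n \<Longrightarrow> y i = y' i) \<Longrightarrow> ipn n x y = ipn n x' y'"
  unfolding ipn_def by (intro sum.cong) auto
lemma ipn_sum_right: "ipn n x (\<lambda>i. \<Sum>j\<in>J. c j * A i j) = (\<Sum>j\<in>J. c j * ipn n x (\<lambda>i. A i j))"
  unfolding ipn_def by (simp add: sum_distrib_left sum_distrib_right mult_ac sum.swap[of _ J])
lemma ipn_sum_left: "ipn n (\<lambda>i. \<Sum>j\<in>J. c j * A i j) x = (\<Sum>j\<in>J. c j * ipn n (\<lambda>i. A i j) x)"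
  using ipn_sum_right[where n=n and x=x and J=J and c=c and A=A] by (simp add: ipn_comm)
lemma ipn_diff_left: "ipn n (\<lambda>i. x i - y i) z = ipn n x z - ipn n y z"
  unfolding ipn_def by (simp add: algebra_simps sum_subtractf)
lemma ipn_diff_right: "ipn n z (\<lambda>i. x i - y i) = ipn n z x - ipn n z y"
  unfolding ipn_def by (simp add: algebra_simps sum_subtractf)
lemma ipn_add_left: "ipn n (\<lambda>i. x i + y i) z = ipn n x z + ipn n y z"
  unfolding ipn_def by (simp add: algebra_simps sum.distrib)
lemma ipn_add_right: "ipn n z (\<lambda>i. x i + y i) = ipn n z x + ipn n z y"
  unfolding ipn_def by (simp add: algebra_simps sum.distrib)
lemma ipn_scale_left: "ipn n (\<lambda>i. c * x i) z = c * ipn n x z"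
  unfolding ipn_def by (simp add: algebra_simps sum_distrib_left)
lemma ipn_scale_right: "ipn n z (\<lambda>i. c * x i) = c * ipn n z x"
  unfolding ipn_def by (simp add: algebra_simps sum_distrib_left)
lemma ipn_zero_right: "(\<And>i. i<n \<Longrightarrow> x i = 0) \<Longrightarrow> ipn n z x = 0"
  unfolding ipn_def by simp

lemma colspace_ipn:
  assumes "w \<in> colspace n A J" "\<And>j. j\<in>J \<Longrightarrow> ipn n x (Defs.col A j) = 0"
  shows "ipn n x w = 0"
proof -
  obtain c where c: "\<forall>i<n. w i = (\<Sum>j\<in>J. c j * A i j)" using assms(1) unfolding colspace_def by auto
  have "ipn n x w = ipn n x (\<lambda>i. \<Sum>j\<in>J. c j * A i j)" by (rule ipn_cong) (auto simp: c)
  also have "\<dots> = (\<Sum>j\<in>J. c j * ipn n x (\<lambda>i. A i j))" by (rule ipn_sum_right)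
  also have "\<dots> = 0" using assms(2) by (simp add: Defs.col_def)
  finally show ?thesis .
qed

lemma gram_inv_exists:
  fixes Y :: "nat \<Rightarrow> nat \<Rightarrow> real"
  assumes fr: "full_col_rank n e Y"
  defines "G \<equiv> (\<lambda>a b. \<Sum>i<n. Y i a * Y i b)"
  shows "\<exists>H. (\<forall>i<e. \<forall>j<e. (\<Sum>l<e. H i l * G l j) = (if i = j then 1 else 0)) \<and>
             (\<forall>i<e. \<forall>j<e. (\<Sum>l<e. G i l * H l j) = (if i = j then 1 else 0)) \<and>
             (\<forall>i j. e \<le> i \<or> e \<le> j \<longrightarrow> H i j = 0)"
proof -
  define A where "A = mat e e (\<lambda>(a,b). G a b)"
  have A: "A \<in> carrier_mat e e" by (simp add: A_def)
  have "det A \<noteq> 0"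
  proof
    assume "det A = 0"
    then obtain v where v: "v \<in> carrier_vec e" "v \<noteq> 0\<^sub>v e" "A *\<^sub>v v = 0\<^sub>v e"
      using det_0_iff_vec_prod_zero[OF A] by auto
    define c where "c j = (if j < e then v $ j else 0)" for j
    have Gc: "(\<Sum>b<e. G a b * c b) = 0" if "a < e" for a
    proof -
      have "(A *\<^sub>v v) $ a = 0" using v(3) that by simp
      moreover have "(A *\<^sub>v v) $ a = (\<Sum>b<e. G a b * c b)"
        using that v(1) by (auto simp: A_def scalar_prod_def c_def atLeast0LessThan intro!: sum.cong)
      ultimately show ?thesis by simp
    qed
    have "(\<Sum>a<e. c a * (\<Sum>b<e. G a b * c b)) = (\<Sum>a<e. \<Sum>b<e. \<Sum>i<n. c a * Y i a * (c b * Y i b))"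
      unfolding G_def by (simp add: sum_distrib_left sum_distrib_right mult_ac)
    also have "\<dots> = (\<Sum>a<e. \<Sum>i<n. \<Sum>b<e. c a * Y i a * (c b * Y i b))"
      by (rule sum.cong[OF refl]) (rule sum.swap)
    also have "\<dots> = (\<Sum>i<n. \<Sum>a<e. \<Sum>b<e. c a * Y i a * (c b * Y i b))"
      by (rule sum.swap)
    also have "\<dots> = (\<Sum>i<n. (\<Sum>b<e. c b * Y i b) * (\<Sum>a<e. c a * Y i a))"
      by (rule sum.cong[OF refl]) (simp add: sum_product mult_ac)
    finally have "(\<Sum>i<n. (\<Sum>b<e. c b * Y i b) * (\<Sum>a<e. c a * Y i a)) = (\<Sum>a<e. c a * (\<Sum>b<e. G a b * c b))" ..
    also have "\<dots> = 0" using Gc by simp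
    finally have "(\<Sum>i<n. (\<Sum>b<e. c b * Y i b)^2) = 0" by (simp add: power2_eq_square)
    hence "\<forall>i<n. (\<Sum>b<e. c b * Y i b) = 0"
      by (subst (asm) sum_nonneg_eq_0_iff) auto
    with fr have "\<forall>j<e. c j = 0" unfolding full_col_rank_def by blast
    hence "v = 0\<^sub>v e" using v(1) by (intro eq_vecI) (auto simp: c_def)
    with v(2) show False by simp
  qed
  from det_non_zero_imp_unit[OF A this, of "()"]
  obtain B where B: "B \<in> carrier_mat e e" "B * A = 1\<^sub>m e" "A * B = 1\<^sub>m e"
    unfolding Units_def ring_mat_def by auto
  define H where "H i j = (if i < e \<and> j < e then B $$ (i, j) else 0)" for i j
  have 1: "(\<Sum>l<e. H i l * G l j) = (if i = j then 1 else 0)" if "i<e" "j<e" for i j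
  proof -
    have "(B * A) $$ (i, j) = (\<Sum>l<e. H i l * G l j)"
      using that B(1) A by (auto simp: A_def H_def scalar_prod_def atLeast0LessThan intro!: sum.cong)
    thus ?thesis using B(2) that by simp
  qed
  have 2: "(\<Sum>l<e. G i l * H l j) = (if i = j then 1 else 0)" if "i<e" "j<e" for i j
  proof -
    have "(A * B) $$ (i, j) = (\<Sum>l<e. G i l * H l j)"
      using that B(1) A by (auto simp: A_def H_def scalar_prod_def atLeast0LessThan intro!: sum.cong)
    thus ?thesis using B(3) that by simp
  qed
  show ?thesis using 1 2 by (intro exI[of _ H]) (auto simp: H_def)
qed

lemma matinv_props:
  fixes Y :: "nat \<Rightarrow> nat \<Rightarrow> real"
  assumes fr: "full_col_rank n e Y"
  defines "G \<equiv> (\<lambda>a b. \<Sum>i<n. Y i a * Y i b)"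
  shows "\<forall>i<e. \<forall>j<e. (\<Sum>l<e. matinv e G i l * G l j) = (if i = j then 1 else 0)"
    "\<forall>i<e. \<forall>j<e. (\<Sum>l<e. G i l * matinv e G l j) = (if i = j then 1 else 0)"
    "\<forall>i j. e \<le> i \<or> e \<le> j \<longrightarrow> matinv e G i j = 0"
proof -
  obtain H where H: "(\<forall>i<e. \<forall>j<e. (\<Sum>l<e. H i l * G l j) = (if i = j then 1 else 0))"
     "(\<forall>i<e. \<forall>j<e. (\<Sum>l<e. G i l * H l j) = (if i = j then 1 else 0))"
     "(\<forall>i j. e \<le> i \<or> e \<le> j \<longrightarrow> H i j = 0)"
    using gram_inv_exists[OF fr] unfolding G_def by blast
  have "matinv e G = H" unfolding matinv_def
  proof (rule the_equality)
    show "(\<forall>i<e. \<forall>j<e. (\<Sum>l<e. H i l * G l j) = (if i = j then 1 else 0)) \<and>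
     (\<forall>i<e. \<forall>j<e. (\<Sum>l<e. G i l * H l j) = (if i = j then 1 else 0)) \<and>
     (\<forall>i j. e \<le> i \<or> e \<le> j \<longrightarrow> H i j = 0)" using H by blast
    fix H' assume H': "(\<forall>i<e. \<forall>j<e. (\<Sum>l<e. H' i l * G l j) = (if i = j then 1 else 0)) \<and>
     (\<forall>i<e. \<forall>j<e. (\<Sum>l<e. G i l * H' l j) = (if i = j then 1 else 0)) \<and>
     (\<forall>i j. e \<le> i \<or> e \<le> j \<longrightarrow> H' i j = 0)"
    show "H' = H"
    proof (intro ext)
      fix i j
      show "H' i j = H i j"
      proof (cases "i < e \<and> j < e")
        case True
        have "H' i j = (\<Sum>l<e. if l = j then H' i l else 0)" using True by simp
        also have "\<dots> = (\<Sum>l<e. H' i l * (\<Sum>p<e. G l p * H p j))"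
          using H(2) True by (intro sum.cong refl) auto
        also have "\<dots> = (\<Sum>l<e. \<Sum>p<e. H' i l * G l p * H p j)"
          by (simp add: sum_distrib_left mult_ac)
        also have "\<dots> = (\<Sum>p<e. \<Sum>l<e. H' i l * G l p * H p j)" by (rule sum.swap)
        also have "\<dots> = (\<Sum>p<e. (\<Sum>l<e. H' i l * G l p) * H p j)"
          by (simp add: sum_distrib_right)
        also have "\<dots> = (\<Sum>p<e. if p = i then H p j else 0)"
          using H' True by (intro sum.cong refl) auto
        also have "\<dots> = H i j" using True by simp
        finally show ?thesis .
      next
        case False thus ?thesis using H(3) H' by auto
      qed
    qed
  qed
  thus "\<forall>i<e. \<forall>j<e. (\<Sum>l<e. matinv e G i l * G l j) = (if i = j then 1 else 0)"
    "\<forall>i<e. \<forall>j<e. (\<Sum>l<e. G i l * matinv e G l j) = (if i = j then 1 else 0)"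
    "\<forall>i j. e \<le> i \<or> e \<le> j \<longrightarrow> matinv e G i j = 0" using H by auto
qed

lemma ols_normal:
  fixes X :: "nat \<Rightarrow> nat \<Rightarrow> real"
  assumes fr: "full_col_rank n d X" and l: "l < d"
  shows "(\<Sum>i<n. X i l * (\<Sum>j<d. X i j * ols n d X z j)) = (\<Sum>i<n. X i l * z i)"
proof -
  define G where "G = (\<lambda>a b. \<Sum>i<n. X i a * X i b)"
  define H where "H = matinv d G"
  define b where "b p = (\<Sum>i<n. X i p * z i)" for p
  have olsH: "ols n d X z j = (\<Sum>p<d. H j p * b p)" for j
    by (simp add: ols_def H_def G_def b_def)
  have "(\<Sum>i<n. X i l * (\<Sum>j<d. X i j * ols n d X z j)) = (\<Sum>j<d. G l j * ols n d X z j)"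
    by (simp add: G_def sum_distrib_left sum_distrib_right mult_ac sum.swap[of _ "{..<n}"])
  also have "\<dots> = (\<Sum>j<d. \<Sum>p<d. G l j * H j p * b p)"
    by (simp add: olsH sum_distrib_left mult_ac)
  also have "\<dots> = (\<Sum>p<d. \<Sum>j<d. G l j * H j p * b p)" by (rule sum.swap)
  also have "\<dots> = (\<Sum>p<d. (\<Sum>j<d. G l j * H j p) * b p)" by (simp add: sum_distrib_right)
  also have "\<dots> = (\<Sum>p<d. if p = l then b p else 0)"
    using matinv_props(2)[OF fr] l by (intro sum.cong refl) (auto simp: H_def G_def)
  also have "\<dots> = b l" using l by simp
  finally show ?thesis by (simp add: b_def)
qed

lemma colspace_diff: "v \<in> colspace n A J \<Longrightarrow> w \<in> colspace n A J \<Longrightarrow> (\<lambda>i. v i - w i) \<in> colspace n A J"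
proof -
  assume "v \<in> colspace n A J" "w \<in> colspace n A J"
  then obtain cv cw where "\<forall>i<n. v i = (\<Sum>j\<in>J. cv j * A i j)" "\<forall>i<n. w i = (\<Sum>j\<in>J. cw j * A i j)"
    unfolding colspace_def by auto
  thus ?thesis unfolding colspace_def
    by (intro CollectI exI[of _ "\<lambda>j. cv j - cw j"]) (simp add: algebra_simps sum_subtractf)
qed

lemma proj_unique:
  assumes "\<forall>i\<ge>n. p i = 0" "p \<in> colspace n A J" "\<forall>w\<in>colspace n A J. ipn n (\<lambda>i. y i - p i) w = 0"
  shows "proj n A J y = p"
  unfolding proj_def
proof (rule the_equality)
  show "(\<forall>i\<ge>n. p i = 0) \<and> p \<in> colspace n A J \<and> (\<forall>w\<in>colspace n A J. ipn n (\<lambda>i. y i - p i) w = 0)"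
    using assms by blast
  fix p' assume p': "(\<forall>i\<ge>n. p' i = 0) \<and> p' \<in> colspace n A J \<and> (\<forall>w\<in>colspace n A J. ipn n (\<lambda>i. y i - p' i) w = 0)"
  define D where "D = (\<lambda>i. p' i - p i)"
  have D: "D \<in> colspace n A J" unfolding D_def using p' assms by (intro colspace_diff) auto
  have "ipn n D D = ipn n (\<lambda>i. y i - p i) D - ipn n (\<lambda>i. y i - p' i) D"
    by (simp add: D_def ipn_diff_left[symmetric] algebra_simps)
  also have "\<dots> = 0" using D p' assms by simp
  finally have "\<forall>i<n. D i = 0" by (simp add: ipn_zero_iff)
  thus "p' = p" using p' assms by (intro ext) (metis D_def eq_iff_diff_eq_0 not_less)
qed

lemma proj_char_gen:
  fixes Y :: "nat \<Rightarrow> nat \<Rightarrow> real"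
  assumes fr: "full_col_rank n e Y"
  shows "(\<forall>i\<ge>n. proj n Y {..<e} y i = 0) \<and> proj n Y {..<e} y \<in> colspace n Y {..<e} \<and>
         (\<forall>w\<in>colspace n Y {..<e}. ipn n (\<lambda>i. y i - proj n Y {..<e} y i) w = 0)"
proof -
  define p where "p i = (if i < n then (\<Sum>j<e. ols n e Y y j * Y i j) else 0)" for i
  have p1: "\<forall>i\<ge>n. p i = 0" by (simp add: p_def)
  have p2: "p \<in> colspace n Y {..<e}" unfolding colspace_def p_def by auto
  have p3: "\<forall>w\<in>colspace n Y {..<e}. ipn n (\<lambda>i. y i - p i) w = 0"
  proof
    fix w assume w: "w \<in> colspace n Y {..<e}"
    show "ipn n (\<lambda>i. y i - p i) w = 0"
    proof (rule colspace_ipn[OF w])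
      fix j assume j: "j \<in> {..<e}"
      have "ipn n (\<lambda>i. y i - p i) (Defs.col Y j) = ipn n y (Defs.col Y j) - ipn n p (Defs.col Y j)"
        by (rule ipn_diff_left)
      also have "ipn n p (Defs.col Y j) = (\<Sum>i<n. Y i j * (\<Sum>l<e. Y i l * ols n e Y y l))"
        unfolding ipn_def Defs.col_def p_def by (intro sum.cong) (auto simp: mult_ac)
      also have "\<dots> = (\<Sum>i<n. Y i j * y i)" using ols_normal[OF fr] j by simp
      finally show "ipn n (\<lambda>i. y i - p i) (Defs.col Y j) = 0"
        by (simp add: ipn_def Defs.col_def mult_ac)
    qed
  qed
  have "proj n Y {..<e} y = p" by (rule proj_unique[OF p1 p2 p3])
  thus ?thesis using p1 p2 p3 by simp
qed

lemma sum_shift_ivl: fixes f :: "nat \<Rightarrow> 'a::comm_monoid_add" shows "j0 \<le> d \<Longrightarrow> (\<Sum>j\<in>{j0..<d}. f j) = (\<Sum>l<d - j0. f (j0 + l))"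
  using sum.shift_bounds_nat_ivl[of f 0 j0 "d - j0"] by (simp add: atLeast0LessThan add.commute)

lemma colspace_shift:
  assumes "j0 \<le> d"
  shows "colspace n X {j0..<d} = colspace n (\<lambda>i l. X i (j0 + l)) {..<d - j0}"
proof (intro equalityI subsetI)
  fix v assume "v \<in> colspace n X {j0..<d}"
  then obtain c where c: "\<forall>i<n. v i = (\<Sum>j\<in>{j0..<d}. c j * X i j)" unfolding colspace_def by auto
  show "v \<in> colspace n (\<lambda>i l. X i (j0 + l)) {..<d - j0}" unfolding colspace_def
    by (intro CollectI exI[of _ "\<lambda>l. c (j0 + l)"]) (simp add: c sum_shift_ivl[OF assms])
next
  fix v assume "v \<in> colspace n (\<lambda>i l. X i (j0 + l)) {..<d - j0}"
  then obtain c where c: "\<forall>i<n. v i = (\<Sum>l<d - j0. c l * X i (j0 + l))" unfolding colspace_def by auto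
  show "v \<in> colspace n X {j0..<d}" unfolding colspace_def
    by (intro CollectI exI[of _ "\<lambda>j. c (j - j0)"]) (simp add: c sum_shift_ivl[OF assms])
qed

lemma full_col_rank_shift:
  assumes fr: "full_col_rank n d X" and "j0 \<le> d"
  shows "full_col_rank n (d - j0) (\<lambda>i l. X i (j0 + l))"
  unfolding full_col_rank_def
proof (intro allI impI)
  fix c :: "nat \<Rightarrow> real" and l
  assume c: "\<forall>i<n. (\<Sum>l<d - j0. c l * X i (j0 + l)) = 0" and l: "l < d - j0"
  define c' where "c' j = (if j0 \<le> j then c (j - j0) else 0)" for j
  have "(\<Sum>j<d. c' j * X i j) = 0" if i: "i < n" for i
  proof -
    have "(\<Sum>j<d. c' j * X i j) = (\<Sum>j\<in>{0..<j0}. c' j * X i j) + (\<Sum>j\<in>{j0..<d}. c' j * X i j)"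
      using assms(2) by (simp add: sum.atLeastLessThan_concat atLeast0LessThan[symmetric])
    also have "(\<Sum>j\<in>{0..<j0}. c' j * X i j) = 0" by (simp add: c'_def)
    also have "(\<Sum>j\<in>{j0..<d}. c' j * X i j) = (\<Sum>l<d - j0. c l * X i (j0 + l))"
      using assms(2) by (simp add: sum_shift_ivl c'_def)
    finally show ?thesis using c i by simp
  qed
  hence "\<forall>j<d. c' j = 0" using fr unfolding full_col_rank_def by blast
  hence "c' (j0 + l) = 0" using l by simp
  thus "c l = 0" by (simp add: c'_def)
qed

lemma proj_colspace_cong: "colspace n A J = colspace n B K \<Longrightarrow> proj n A J = proj n B K"
  unfolding proj_def by (intro ext) simp

lemma proj_char:
  fixes X :: "nat \<Rightarrow> nat \<Rightarrow> real"
  assumes fr: "full_col_rank n d X" and j0: "j0 \<le> d"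
  shows "(\<forall>i\<ge>n. proj n X {j0..<d} y i = 0) \<and> proj n X {j0..<d} y \<in> colspace n X {j0..<d} \<and>
         (\<forall>w\<in>colspace n X {j0..<d}. ipn n (\<lambda>i. y i - proj n X {j0..<d} y i) w = 0)"
  using proj_char_gen[OF full_col_rank_shift[OF fr j0], of y]
    colspace_shift[OF j0, of n X] proj_colspace_cong[OF colspace_shift[OF j0, of n X]]
  by simp

lemma orthonormal_parseval:
  assumes orth: "\<forall>a < m. \<forall>b < m. ipn n (Defs.col V a) (Defs.col V b) = (if a = b then 1 else 0)"
    and e: "\<forall>i<n. e i = (\<Sum>a<m. c a * V i a)"
  shows "\<forall>b<m. ipn n (Defs.col V b) e = c b" "ipn n e e = (\<Sum>a<m. (c a)^2)"
proof -
  have ipc: "ipn n (Defs.col V b) e = c b" if b: "b < m" for b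
  proof -
    have "ipn n (Defs.col V b) e = ipn n (Defs.col V b) (\<lambda>i. \<Sum>a<m. c a * V i a)"
      by (rule ipn_cong) (auto simp: e)
    also have "\<dots> = (\<Sum>a<m. c a * ipn n (Defs.col V b) (\<lambda>i. V i a))" by (rule ipn_sum_right)
    also have "\<dots> = (\<Sum>a<m. if a = b then c a else 0)"
      using orth b by (intro sum.cong refl) (auto simp: Defs.col_def)
    also have "\<dots> = c b" using b by simp
    finally show ?thesis .
  qed
  thus "\<forall>b<m. ipn n (Defs.col V b) e = c b" by blast
  have "ipn n e e = ipn n (\<lambda>i. \<Sum>a<m. c a * V i a) e"
    by (rule ipn_cong) (auto simp: e)
  also have "\<dots> = (\<Sum>a<m. c a * ipn n (\<lambda>i. V i a) e)" by (rule ipn_sum_left)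
  also have "\<dots> = (\<Sum>a<m. (c a)^2)"
    using ipc by (intro sum.cong refl) (auto simp: Defs.col_def power2_eq_square)
  finally show "ipn n e e = (\<Sum>a<m. (c a)^2)" .
qed

lemma sum_split_lessThan:
  fixes f :: "nat \<Rightarrow> 'a::comm_monoid_add"
  shows "k \<le> m \<Longrightarrow> (\<Sum>a<m. f a) = (\<Sum>a<k. f a) + (\<Sum>a\<in>{k..<m}. f a)"
  by (simp add: sum.atLeastLessThan_concat atLeast0LessThan[symmetric])

lemma colspace_mono_ivl:
  assumes "k \<le> d"
  shows "colspace n X {k..<d} \<subseteq> colspace n X {..<d}"
proof
  fix v assume "v \<in> colspace n X {k..<d}"
  then obtain c where c: "\<forall>i<n. v i = (\<Sum>j\<in>{k..<d}. c j * X i j)" unfolding colspace_def by auto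
  show "v \<in> colspace n X {..<d}" unfolding colspace_def
  proof (intro CollectI exI[of _ "\<lambda>j. if k \<le> j then c j else 0"] allI impI)
    fix i assume "i < n"
    have "(\<Sum>j<d. (if k \<le> j then c j else 0) * X i j) =
          (\<Sum>j<k. (if k \<le> j then c j else 0) * X i j) + (\<Sum>j\<in>{k..<d}. (if k \<le> j then c j else 0) * X i j)"
      using assms by (rule sum_split_lessThan)
    also have "\<dots> = (\<Sum>j\<in>{k..<d}. c j * X i j)" by simp
    finally show "v i = (\<Sum>j<d. (if k \<le> j then c j else 0) * X i j)" using c \<open>i < n\<close> by simp
  qed
qed

lemma sum_delta_mult:
  fixes f :: "nat \<Rightarrow> real"
  shows "finite J \<Longrightarrow> (\<Sum>j\<in>J. (if j = a then c else 0) * f j) = (if a \<in> J then c * f a else 0)"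
  by (induct J rule: finite_induct) auto

lemma col_in_colspace: "j \<in> J \<Longrightarrow> finite J \<Longrightarrow> Defs.col X j \<in> colspace n X J"
  unfolding colspace_def Defs.col_def
  by (intro CollectI exI[of _ "\<lambda>l. if l = j then 1 else 0"]) (simp add: sum_delta_mult)

locale LM =
  fixes n d k :: nat and X V :: "nat \<Rightarrow> nat \<Rightarrow> real"
  assumes dn: "d < n" and k1: "1 \<le> k" and kd: "k < d"
    and fr: "full_col_rank n d X"
    and V_orthonormal: "\<forall>a < n - d + k. \<forall>b < n - d + k.
           ipn n (Defs.col V a) (Defs.col V b) = (if a = b then 1 else 0)"
    and V_span: "colspace n V {..<n - d + k} = orth_compl n (colspace n X {k..<d})"
    and V_first: "\<forall>i<k. \<forall>r<n. V r i =
           (X r i - proj n X {Suc i..<d} (Defs.col X i) r)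
             / nrm n (\<lambda>s. X s i - proj n X {Suc i..<d} (Defs.col X i) s)"
begin

abbreviation "m \<equiv> n - d + k"

lemma km: "k < m" using dn kd by simp

lemma V_orth_compl: "a < m \<Longrightarrow> Defs.col V a \<in> orth_compl n (colspace n X {k..<d})"
  using col_in_colspace[of a "{..<m}" V n] V_span by auto

lemma V_perp: "a < m \<Longrightarrow> w \<in> colspace n X {k..<d} \<Longrightarrow> ipn n (Defs.col V a) w = 0"
  using V_orth_compl unfolding orth_compl_def by auto

lemma first_decomp:
  assumes a: "a < k"
  obtains N p where "N \<noteq> 0" "p \<in> colspace n X {Suc a..<d}" "\<forall>r<n. X r a = N * V r a + p r"
proof -
  define p where "p = proj n X {Suc a..<d} (Defs.col X a)"
  define N where "N = nrm n (\<lambda>s. X s a - p s)"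
  have p: "p \<in> colspace n X {Suc a..<d}" using proj_char[OF fr, of "Suc a"] a kd by (simp add: p_def)
  have Vr: "\<forall>r<n. V r a = (X r a - p r) / N" using V_first a by (simp add: p_def N_def Defs.col_def)
  have "N \<noteq> 0"
  proof
    assume "N = 0"
    hence "ipn n (Defs.col V a) (Defs.col V a) = 0" using Vr by (simp add: ipn_def Defs.col_def)
    moreover have "ipn n (Defs.col V a) (Defs.col V a) = 1" using V_orthonormal a km by simp
    ultimately show False by simp
  qed
  moreover have "\<forall>r<n. X r a = N * V r a + p r" using Vr \<open>N \<noteq> 0\<close> by simp
  ultimately show ?thesis using that p by blast
qed

lemma V_in_X:
  assumes a: "a < k"
  shows "Defs.col V a \<in> colspace n X {..<d}"
proof -
  obtain N p where N: "N \<noteq> 0" and p: "p \<in> colspace n X {Suc a..<d}" and Xr: "\<forall>r<n. X r a = N * V r a + p r"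
    using first_decomp[OF a] by blast
  obtain c where c: "\<forall>r<n. p r = (\<Sum>j\<in>{Suc a..<d}. c j * X r j)" using p unfolding colspace_def by auto
  show ?thesis unfolding colspace_def
  proof (intro CollectI exI[of _ "\<lambda>j. (if j = a then 1 / N else 0) - (if Suc a \<le> j then c j / N else 0)"] allI impI)
    fix r assume r: "r < n"
    have s1: "(\<Sum>j<d. (if j = a then 1 / N else 0) * X r j) = X r a / N" using a kd by (simp add: sum_delta_mult)
    have "(\<Sum>j<d. (if Suc a \<le> j then c j / N else 0) * X r j) = (\<Sum>j\<in>{Suc a..<d}. c j / N * X r j)"
      using sum_split_lessThan[of "Suc a" d "\<lambda>j. (if Suc a \<le> j then c j / N else 0) * X r j"] a kd by simp
    also have "\<dots> = p r / N" using c r by (simp add: sum_divide_distrib)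
    finally have s2: "(\<Sum>j<d. (if Suc a \<le> j then c j / N else 0) * X r j) = p r / N" .
    have "(\<Sum>j<d. ((if j = a then 1 / N else 0) - (if Suc a \<le> j then c j / N else 0)) * X r j) = X r a / N - p r / N"
      by (simp add: left_diff_distrib sum_subtractf s1 s2)
    also have "\<dots> = V r a" using Xr r N by (simp add: field_simps)
    finally show "Defs.col V a r = (\<Sum>j<d. ((if j = a then 1 / N else 0) - (if Suc a \<le> j then c j / N else 0)) * X r j)"
      by (simp add: Defs.col_def)
  qed
qed

lemma V_perp_X_col:
  assumes a: "k \<le> a" "a < m" and j: "j < d"
  shows "ipn n (Defs.col V a) (Defs.col X j) = 0"
  using j
proof (induction "d - j" arbitrary: j rule: less_induct)
  case (less j)
  show ?case
  proof (cases "k \<le> j")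
    case True
    thus ?thesis using V_perp[OF a(2) col_in_colspace[of j "{k..<d}" X n]] less.prems by simp
  next
    case False
    hence jk: "j < k" by simp
    obtain N p where N: "N \<noteq> 0" and p: "p \<in> colspace n X {Suc j..<d}" and Xr: "\<forall>r<n. X r j = N * V r j + p r"
      using first_decomp[OF jk] by blast
    have "ipn n (Defs.col V a) (Defs.col X j) = ipn n (Defs.col V a) (\<lambda>r. N * V r j + p r)"
      by (rule ipn_cong) (auto simp: Xr Defs.col_def)
    also have "\<dots> = N * ipn n (Defs.col V a) (Defs.col V j) + ipn n (Defs.col V a) p"
      by (simp add: ipn_add_right ipn_scale_right Defs.col_def)
    also have "ipn n (Defs.col V a) (Defs.col V j) = 0" using V_orthonormal a jk km by auto
    also have "ipn n (Defs.col V a) p = 0"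
      by (rule colspace_ipn[OF p]) (use less in auto)
    finally show ?thesis by simp
  qed
qed

lemma V_perp_X:
  assumes a: "k \<le> a" "a < m" and w: "w \<in> colspace n X {..<d}"
  shows "ipn n (Defs.col V a) w = 0"
  by (rule colspace_ipn[OF w]) (use V_perp_X_col a in auto)


lemma resid0:
  fixes y :: "nat \<Rightarrow> real"
  defines "yhat \<equiv> proj n X {k..<d} y"
  shows "ipn n (\<lambda>i. y i - yhat i) (\<lambda>i. y i - yhat i) = (\<Sum>a<m. (ipn n (Defs.col V a) y)^2)"
    and "\<forall>a<m. ipn n (Defs.col V a) (\<lambda>i. y i - yhat i) = ipn n (Defs.col V a) y"
    and "\<forall>a<m. ipn n (Defs.col V a) yhat = 0"
proof -
  have pc: "yhat \<in> colspace n X {k..<d}" "\<forall>w\<in>colspace n X {k..<d}. ipn n (\<lambda>i. y i - yhat i) w = 0"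
    using proj_char[OF fr, of k y] kd by (auto simp: yhat_def)
  have "(\<lambda>i. y i - yhat i) \<in> orth_compl n (colspace n X {k..<d})" unfolding orth_compl_def using pc by auto
  hence "(\<lambda>i. y i - yhat i) \<in> colspace n V {..<m}" using V_span by simp
  then obtain c where c: "\<forall>i<n. y i - yhat i = (\<Sum>a<m. c a * V i a)" unfolding colspace_def by auto
  note P = orthonormal_parseval[where e = "\<lambda>i. y i - yhat i", OF V_orthonormal, simplified, OF c]
  show V0: "\<forall>a<m. ipn n (Defs.col V a) yhat = 0" using V_perp pc(1) by auto
  show V1: "\<forall>a<m. ipn n (Defs.col V a) (\<lambda>i. y i - yhat i) = ipn n (Defs.col V a) y"
    using V0 by (simp add: ipn_diff_right)
  have "ipn n (\<lambda>i. y i - yhat i) (\<lambda>i. y i - yhat i) = (\<Sum>a<m. (c a)^2)" using P(2) .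
  also have "\<dots> = (\<Sum>a<m. (ipn n (Defs.col V a) y)^2)"
    using P(1) V1 by (intro sum.cong refl) auto
  finally show "ipn n (\<lambda>i. y i - yhat i) (\<lambda>i. y i - yhat i) = (\<Sum>a<m. (ipn n (Defs.col V a) y)^2)" .
qed

lemma resid1:
  fixes y :: "nat \<Rightarrow> real"
  defines "py \<equiv> proj n X {..<d} y"
  shows "ipn n (\<lambda>i. y i - py i) (\<lambda>i. y i - py i) = (\<Sum>a\<in>{k..<m}. (ipn n (Defs.col V a) y)^2)"
proof -
  have pc: "py \<in> colspace n X {..<d}" "\<forall>w\<in>colspace n X {..<d}. ipn n (\<lambda>i. y i - py i) w = 0"
    using proj_char[OF fr, of 0 y] by (auto simp: py_def atLeast0LessThan)
  have "(\<lambda>i. y i - py i) \<in> orth_compl n (colspace n X {k..<d})"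
    unfolding orth_compl_def using pc colspace_mono_ivl[of k d n X] kd by auto
  hence "(\<lambda>i. y i - py i) \<in> colspace n V {..<m}" using V_span by simp
  then obtain c where c: "\<forall>i<n. y i - py i = (\<Sum>a<m. c a * V i a)" unfolding colspace_def by auto
  note P = orthonormal_parseval[where e = "\<lambda>i. y i - py i", OF V_orthonormal, simplified, OF c]
  have c0: "c a = 0" if "a < k" for a
  proof -
    have "c a = ipn n (Defs.col V a) (\<lambda>i. y i - py i)" using P(1) that km by simp
    also have "\<dots> = 0" using pc(2) V_in_X[OF that] by (simp add: ipn_comm)
    finally show ?thesis .
  qed
  have c1: "c a = ipn n (Defs.col V a) y" if "k \<le> a" "a < m" for a
  proof -
    have "c a = ipn n (Defs.col V a) (\<lambda>i. y i - py i)" using P(1) that by simp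
    also have "\<dots> = ipn n (Defs.col V a) y" using V_perp_X[OF that pc(1)] by (simp add: ipn_diff_right)
    finally show ?thesis .
  qed
  have "ipn n (\<lambda>i. y i - py i) (\<lambda>i. y i - py i) = (\<Sum>a<m. (c a)^2)" using P(2) .
  also have "\<dots> = (\<Sum>a<k. (c a)^2) + (\<Sum>a\<in>{k..<m}. (c a)^2)" using km by (intro sum_split_lessThan) simp
  also have "\<dots> = (\<Sum>a\<in>{k..<m}. (ipn n (Defs.col V a) y)^2)" using c0 c1 by simp
  finally show ?thesis .
qed

lemma T_eq:
  fixes z :: "nat \<Rightarrow> real"
  assumes a: "a < k"
  shows "(\<Sum>i<n. V i a * (\<Sum>j<k. X i j * ols n d X z j)) = ipn n (Defs.col V a) z"
proof -
  define ob where "ob = ols n d X z"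
  have split: "(\<Sum>j<k. X i j * ob j) = (\<Sum>j<d. X i j * ob j) - (\<Sum>j\<in>{k..<d}. ob j * X i j)" for i
    using sum_split_lessThan[of k d "\<lambda>j. X i j * ob j"] kd by (simp add: mult.commute)
  have "(\<Sum>i<n. V i a * (\<Sum>j<k. X i j * ob j)) = ipn n (Defs.col V a) (\<lambda>i. (\<Sum>j<d. X i j * ob j) - (\<Sum>j\<in>{k..<d}. ob j * X i j))"
    by (simp add: ipn_def Defs.col_def split)
  also have "\<dots> = ipn n (Defs.col V a) (\<lambda>i. \<Sum>j<d. X i j * ob j) - ipn n (Defs.col V a) (\<lambda>i. \<Sum>j\<in>{k..<d}. ob j * X i j)"
    by (rule ipn_diff_right)
  also have "ipn n (Defs.col V a) (\<lambda>i. \<Sum>j\<in>{k..<d}. ob j * X i j) = 0"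
  proof (rule V_perp)
    show "a < m" using a km by simp
    show "(\<lambda>i. \<Sum>j\<in>{k..<d}. ob j * X i j) \<in> colspace n X {k..<d}" unfolding colspace_def by blast
  qed
  also have "ipn n (Defs.col V a) (\<lambda>i. \<Sum>j<d. X i j * ob j) = ipn n (Defs.col V a) z"
  proof -
    have "ipn n (\<lambda>i. z i - (\<Sum>j<d. X i j * ob j)) (Defs.col V a) = 0"
    proof (rule colspace_ipn[OF V_in_X[OF a]])
      fix l assume "l \<in> {..<d}"
      hence "(\<Sum>i<n. X i l * (\<Sum>j<d. X i j * ob j)) = (\<Sum>i<n. X i l * z i)"
        using ols_normal[OF fr] unfolding ob_def by simp
      thus "ipn n (\<lambda>i. z i - (\<Sum>j<d. X i j * ob j)) (Defs.col X l) = 0"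
        by (simp add: ipn_def Defs.col_def algebra_simps sum_subtractf)
    qed
    thus ?thesis by (simp add: ipn_comm ipn_diff_right)
  qed
  finally show ?thesis by (simp add: ob_def)
qed

lemma nrm_scale: "nrm k (\<lambda>a. s * f a) = \<bar>s\<bar> * nrm k f"
proof -
  have "ipn k (\<lambda>a. s * f a) (\<lambda>a. s * f a) = s^2 * ipn k f f"
    by (simp add: ipn_def sum_distrib_left power2_eq_square mult_ac)
  thus ?thesis by (simp add: nrm_def real_sqrt_mult)
qed

lemma key_linear:
  fixes y :: "nat \<Rightarrow> real"
  defines "zz \<equiv> (\<lambda>a. ipn n (Defs.col V a) y)"
  defines "A \<equiv> (\<Sum>a<k. (zz a)^2)" and "C \<equiv> (\<Sum>a\<in>{k..<m}. (zz a)^2)"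
  defines "yhat \<equiv> proj n X {k..<d} y"
  defines "T \<equiv> (\<lambda>z. nrm k (\<lambda>a. \<Sum>i<n. V i a * (\<Sum>j<k. X i j * ols n d X z j)))"
  shows "nrm n (\<lambda>i. y i - yhat i) = sqrt (A + C)"
    and "nrm n (\<lambda>i. y i - proj n X {..<d} y i) = sqrt C"
    and "\<forall>a<k. (\<Sum>i<n. V i a * (y i - yhat i)) = zz a"
    and "\<forall>s ut. T (\<lambda>i. yhat i + s * (\<Sum>a<m. V i a * ut a)) = \<bar>s\<bar> * nrm k ut"
    and "T y = sqrt A"
    and "0 \<le> A" "0 \<le> C"
proof -
  show "0 \<le> A" "0 \<le> C" by (simp_all add: A_def C_def sum_nonneg)
  have "(\<Sum>a<m. (zz a)^2) = A + C" unfolding A_def C_def using km by (intro sum_split_lessThan) simp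
  thus "nrm n (\<lambda>i. y i - yhat i) = sqrt (A + C)"
    using resid0(1)[of y] by (simp add: nrm_def yhat_def zz_def)
  show "nrm n (\<lambda>i. y i - proj n X {..<d} y i) = sqrt C"
    using resid1[of y] by (simp add: nrm_def C_def zz_def)
  show "\<forall>a<k. (\<Sum>i<n. V i a * (y i - yhat i)) = zz a"
    using resid0(2)[of y] km by (simp add: ipn_def Defs.col_def yhat_def zz_def)
  have Tz: "T z = nrm k (\<lambda>a. ipn n (Defs.col V a) z)" for z
    unfolding T_def nrm_def by (intro arg_cong[where f=sqrt]) (simp add: ipn_def[of k] T_eq)
  show "T y = sqrt A" by (simp add: Tz nrm_def ipn_def A_def zz_def power2_eq_square)
  show "\<forall>s ut. T (\<lambda>i. yhat i + s * (\<Sum>a<m. V i a * ut a)) = \<bar>s\<bar> * nrm k ut"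
  proof (intro allI)
    fix s :: real and ut :: "nat \<Rightarrow> real"
    have "ipn n (Defs.col V a) (\<lambda>i. yhat i + s * (\<Sum>b<m. V i b * ut b)) = s * ut a" if a: "a < k" for a
    proof -
      have "ipn n (Defs.col V a) (\<lambda>i. yhat i + s * (\<Sum>b<m. V i b * ut b)) =
            ipn n (Defs.col V a) yhat + s * ipn n (Defs.col V a) (\<lambda>i. \<Sum>b<m. ut b * V i b)"
        by (simp add: ipn_add_right ipn_scale_right mult.commute)
      also have "ipn n (Defs.col V a) yhat = 0" using resid0(3)[of y] a km by (simp add: yhat_def)
      also have "ipn n (Defs.col V a) (\<lambda>i. \<Sum>b<m. ut b * V i b) = (\<Sum>b<m. ut b * ipn n (Defs.col V a) (\<lambda>i. V i b))"
        by (rule ipn_sum_right)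
      also have "\<dots> = (\<Sum>b<m. if b = a then ut b else 0)"
        using V_orthonormal a km by (intro sum.cong refl) (auto simp: Defs.col_def)
      also have "\<dots> = ut a" using a km by simp
      finally show ?thesis by simp
    qed
    hence "T (\<lambda>i. yhat i + s * (\<Sum>a<m. V i a * ut a)) = nrm k (\<lambda>a. s * ut a)"
      unfolding Tz nrm_def by (intro arg_cong[where f=sqrt]) (simp add: ipn_def)
    thus "T (\<lambda>i. yhat i + s * (\<Sum>a<m. V i a * ut a)) = \<bar>s\<bar> * nrm k ut" by (simp add: nrm_scale)
  qed
qed

end

lemma gauss_hyperplane_null:
  fixes w :: "nat \<Rightarrow> real"
  assumes j: "j < n" and wj: "w j \<noteq> 0" and \<sigma>: "0 < \<sigma>"
  shows "AE y in gauss n \<mu> \<sigma>. ipn n w y \<noteq> 0"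
proof -
  define M where "M = (\<lambda>i. density lborel (normal_density (\<mu> i) \<sigma>))"
  have ps: "prob_space (M i)" for i unfolding M_def using \<sigma> by (rule prob_space_normal_density)
  interpret product_sigma_finite M
    unfolding product_sigma_finite_def using ps by (simp add: prob_space_imp_sigma_finite)
  define I where "I = {..<n} - {j}"
  have nI: "{..<n} = insert j I" "finite I" "j \<notin> I" using j by (auto simp: I_def)
  define N where "N = {y \<in> space (PiM {..<n} M). ipn n w y = 0}"
  have sM: "sets (M i) = sets borel" for i by (simp add: M_def)
  have sP: "sets (PiM {..<n} M) = sets (PiM {..<n} (\<lambda>_. borel :: real measure))"
    by (rule sets_PiM_cong) (auto simp: sM)
  have meas0: "(\<lambda>y. \<Sum>i<n. w i * y i) \<in> borel_measurable (PiM {..<n} (\<lambda>_. borel :: real measure))"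
    by measurable
  have meas: "(\<lambda>y. \<Sum>i<n. w i * y i) \<in> borel_measurable (PiM {..<n} M)"
    unfolding measurable_cong_sets[OF sP refl] by (rule meas0)
  have Nm: "N \<in> sets (PiM {..<n} M)"
  proof -
    have "N = (\<lambda>y. \<Sum>i<n. w i * y i) -` {0} \<inter> space (PiM {..<n} M)" by (auto simp: N_def ipn_def)
    thus ?thesis using meas by (auto intro!: measurable_sets)
  qed
  have "emeasure (PiM {..<n} M) N = (\<integral>\<^sup>+ y. indicator N y \<partial>PiM {..<n} M)"
    using Nm by simp
  also have "\<dots> = (\<integral>\<^sup>+ x. (\<integral>\<^sup>+ y. indicator N (x(j := y)) \<partial>M j) \<partial>PiM I M)"
    unfolding nI(1) by (rule product_nn_integral_insert[OF nI(2,3)]) (use Nm nI(1) in simp)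
  also have "\<dots> \<le> (\<integral>\<^sup>+ x. 0 \<partial>PiM I M)"
  proof (rule nn_integral_mono)
    fix x
    define y0 where "y0 = - (\<Sum>i\<in>I. w i * x i) / w j"
    have "indicator N (x(j := y)) \<le> (indicator {y0} y :: ennreal)" for y
    proof (cases "x(j := y) \<in> N")
      case True
      hence "ipn n w (x(j := y)) = 0" by (simp add: N_def)
      moreover have "ipn n w (x(j := y)) = w j * y + (\<Sum>i\<in>I. w i * x i)"
        unfolding ipn_def nI(1) using nI by (simp add: sum.insert) (intro sum.cong, auto)
      ultimately have "y = y0" using wj by (simp add: y0_def field_simps)
      thus ?thesis using True by simp
    qed simp
    hence "(\<integral>\<^sup>+ y. indicator N (x(j := y)) \<partial>M j) \<le> (\<integral>\<^sup>+ y. indicator {y0} y \<partial>M j)"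
      by (intro nn_integral_mono) auto
    also have "\<dots> = emeasure (M j) {y0}" by (simp add: sM)
    also have "\<dots> = (\<integral>\<^sup>+ y. ennreal (normal_density (\<mu> j) \<sigma> y) * indicator {y0} y \<partial>lborel)"
      unfolding M_def by (subst emeasure_density) auto
    also have "\<dots> = (\<integral>\<^sup>+ y. 0 \<partial>(lborel :: real measure))"
    proof (rule nn_integral_cong_AE)
      show "AE y in lborel. ennreal (normal_density (\<mu> j) \<sigma> y) * indicator {y0} y = 0"
        using AE_lborel_singleton[of y0] by eventually_elim simp
    qed
    finally show "(\<integral>\<^sup>+ y. indicator N (x(j := y)) \<partial>M j) \<le> 0" by simp
  qed
  finally have "emeasure (PiM {..<n} M) N = 0" by simp
  hence "N \<in> null_sets (PiM {..<n} M)" using Nm by auto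
  hence "AE y in PiM {..<n} M. y \<notin> N" by (rule AE_not_in)
  hence "AE y in PiM {..<n} M. ipn n w y \<noteq> 0" using AE_space by eventually_elim (auto simp: N_def)
  thus ?thesis unfolding gauss_def M_def by simp
qed

locale FS =
  fixes k q :: nat and b :: real
  assumes k1: "1 \<le> k" and q1: "1 \<le> q" and b0: "0 < b" and b1: "b < 1"
begin

definition "al = real k / 2"
definition "be = real q / 2"
definition "ff u = (1 - u) powr be * u powr (al - 1)"
definition "gg u = (1 - u) powr be * u powr al / (al + be)"
definition "dh u = be / (al + be) * ((1 - u) powr (be - 1) * u powr (al - 1))"
definition "KK = al * unit_ball_vol (real k) * unit_ball_vol (real q) / unit_ball_vol (real (k + q))"

lemma al_pos: "0 < al" and be_pos: "0 < be"
  using k1 q1 by (auto simp: al_def be_def)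

lemma pos_not_nonpos_Int: "0 < (x::real) \<Longrightarrow> x \<notin> \<int>\<^sub>\<le>\<^sub>0"
  by auto

lemma KK_aux0: "(x::real) > 0 \<Longrightarrow> y > 0 \<Longrightarrow> s > 0 \<Longrightarrow> pa > 0 \<Longrightarrow> pb > 0 \<Longrightarrow> ga > 0 \<Longrightarrow> gb > 0 \<Longrightarrow> gab > 0 \<Longrightarrow>
   x * (pa / (x * ga)) * (pb / (y * gb)) / ((pa * pb) / (s * gab)) * y / s = 1 / (ga * gb / gab)"
  by (simp add: field_simps)

lemma KK_aux: "(x::real) > 0 \<Longrightarrow> y > 0 \<Longrightarrow> pa > 0 \<Longrightarrow> pb > 0 \<Longrightarrow> ga > 0 \<Longrightarrow> gb > 0 \<Longrightarrow> gab > 0 \<Longrightarrow>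
   x * (pa / (x * ga)) * (pb / (y * gb)) / ((pa * pb) / ((x + y) * gab)) * y / (x + y) = 1 / (ga * gb / gab)"
  by (rule KK_aux0) auto

lemma KK_beta: "KK * be / (al + be) = 1 / Beta al be"
proof -
  have a: "0 < al" and b: "0 < be" by (rule al_pos, rule be_pos)
  have G1: "Gamma (al + 1) = al * Gamma al" using a by (intro Gamma_plus1 pos_not_nonpos_Int)
  have G2: "Gamma (be + 1) = be * Gamma be" using b by (intro Gamma_plus1 pos_not_nonpos_Int)
  have G3: "Gamma (al + be + 1) = (al + be) * Gamma (al + be)" using a b by (intro Gamma_plus1 pos_not_nonpos_Int) simp
  have P: "pi powr (al + be) = pi powr al * pi powr be" by (simp add: powr_add)
  have kq: "real (k + q) / 2 = al + be" by (simp add: al_def be_def add_divide_distrib)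
  have u1: "unit_ball_vol (real k) = pi powr al / Gamma (al + 1)" by (simp add: unit_ball_vol_def al_def)
  have u2: "unit_ball_vol (real q) = pi powr be / Gamma (be + 1)" by (simp add: unit_ball_vol_def be_def)
  have u3: "unit_ball_vol (real (k + q)) = pi powr (al + be) / Gamma (al + be + 1)"
    unfolding unit_ball_vol_def kq ..
  have g: "Gamma al > 0" "Gamma be > 0" "Gamma (al + be) > 0" using a b by auto
  have pp: "pi powr al > 0" "pi powr be > 0" by auto
  have ab: "al + be > 0" using a b by simp
  show ?thesis unfolding KK_def u1 u2 u3 G1 G2 G3 P Beta_def
    using KK_aux[OF a b pp g(1,2,3)] by simp
qed

lemma KK_pos: "0 < KK"
  unfolding KK_def using al_pos by (intro divide_pos_pos mult_pos_pos unit_ball_vol_pos) auto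

lemma ff_cont: "0 < c \<Longrightarrow> continuous_on {c..1} ff"
  unfolding ff_def using be_pos
  by (intro continuous_on_mult continuous_on_powr' continuous_intros) auto

lemma gg_cont: "0 < c \<Longrightarrow> continuous_on {c..1} gg"
  unfolding gg_def using be_pos al_pos
  by (intro continuous_on_divide continuous_on_mult continuous_on_powr' continuous_intros) auto

lemma ff_nonneg: "0 \<le> ff u" by (simp add: ff_def)

lemma gg_deriv:
  assumes u: "0 < u" "u < 1"
  shows "(gg has_real_derivative (ff u - dh u)) (at u)"
proof -
  have "(gg has_real_derivative
      ((- (be * (1 - u) powr (be - 1))) * u powr al + (1 - u) powr be * (al * u powr (al - 1))) / (al + be)) (at u)"
    unfolding gg_def using u al_pos be_pos by (auto intro!: derivative_eq_intros)
  moreover have "((- (be * (1 - u) powr (be - 1))) * u powr al + (1 - u) powr be * (al * u powr (al - 1))) / (al + be)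
      = ff u - dh u"
  proof -
    define P where "P = (1 - u) powr (be - 1)"
    define R where "R = u powr (al - 1)"
    have "(1 - u) powr be = (1 - u) powr ((be - 1) + 1)" by simp
    also have "\<dots> = (1 - u) powr (be - 1) * (1 - u) powr 1" by (rule powr_add)
    finally have e1: "(1 - u) powr be = (1 - u) * P" unfolding P_def using u by simp
    have e2: "u powr al = u * R" unfolding R_def using u
      by (simp add: powr_diff)
    have ab: "al + be > 0" using al_pos be_pos by simp
    show ?thesis unfolding ff_def dh_def e1 e2 P_def[symmetric] R_def[symmetric]
      using ab by (simp add: field_simps)
  qed
  ultimately show ?thesis by simp
qed


definition "bb x = real k * x / (real q + real k * x)"
definition "x0 = real q / real k * (b / (1 - b))"

lemma kpos: "0 < real k" and qpos: "0 < real q" using k1 q1 by auto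

lemma Dpos: "0 < x \<Longrightarrow> 0 < real q + real k * x"
  using kpos qpos by (intro add_pos_pos mult_pos_pos) auto

lemma x0_pos: "0 < x0" unfolding x0_def using kpos qpos b0 b1 by simp

lemma bb_x0: "bb x0 = b"
  unfolding bb_def x0_def using kpos qpos b0 b1 by (simp add: field_simps)

lemma bb_range: assumes "x0 \<le> x" shows "b \<le> bb x" "bb x < 1"
proof -
  have x: "0 < x" using x0_pos assms by simp
  have D: "0 < real q + real k * x" using Dpos x by simp
  have "b * real q \<le> (1 - b) * real k * x"
  proof -
    have "b * real q = (1 - b) * real k * x0" unfolding x0_def using kpos qpos b1 by (simp add: field_simps)
    also have "\<dots> \<le> (1 - b) * real k * x" using assms b1 kpos by (intro mult_left_mono) auto
    finally show ?thesis .
  qed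
  thus "b \<le> bb x" unfolding bb_def using D by (simp add: field_simps)
  show "bb x < 1" unfolding bb_def using D qpos by (simp add: field_simps)
qed

lemma bb_deriv:
  assumes x: "0 < x"
  shows "(bb has_real_derivative (real k * real q / (real q + real k * x)^2)) (at x)"
proof -
  have D: "0 < real q + real k * x" using Dpos x by simp
  have "(bb has_real_derivative ((real k * (real q + real k * x) - real k * x * real k) / (real q + real k * x)^2)) (at x)"
    unfolding bb_def using D by (auto intro!: derivative_eq_intros simp: power2_eq_square)
  thus ?thesis by (simp add: algebra_simps)
qed

lemma Fdens_eq:
  assumes x: "0 < x"
  shows "KK * dh (bb x) * (real k * real q / (real q + real k * x)^2) = F_density k q x"
proof -
  define D where "D = real q + real k * x"
  have D: "0 < D" using Dpos x by (simp add: D_def)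
  have u: "bb x = real k * x / D" "1 - bb x = real q / D" unfolding bb_def D_def using D[unfolded D_def]
    by (simp_all add: field_simps)
  have u2: "1 - real k * x / D = real q / D" using D by (simp add: D_def field_simps)
  have A1: "(real q / D) powr (be - 1) = (real q powr be / real q) / (D powr be / D)"
    using D qpos by (simp add: powr_divide powr_diff)
  have A2: "(real k * x / D) powr (al - 1) = (real k powr al / real k) * (x powr al / x) / (D powr al / D)"
    using D kpos x by (simp add: powr_divide powr_diff powr_mult)
  have A3: "(real k / real q) powr al = real k powr al / real q powr al"
    using kpos qpos by (simp add: powr_divide)
  have A4: "(1 + real k * x / real q) powr (- (al + be)) = (real q powr al * real q powr be) / (D powr al * D powr be)"
  proof -
    have "1 + real k * x / real q = D / real q" using qpos by (simp add: D_def field_simps)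
    hence "(1 + real k * x / real q) powr (- (al + be)) = inverse ((D / real q) powr (al + be))"
      by (simp only: powr_minus)
    also have "\<dots> = (real q powr al * real q powr be) / (D powr al * D powr be)"
      using D qpos by (simp add: powr_divide powr_add field_simps)
    finally show ?thesis .
  qed
  have A5: "x powr (al - 1) = x powr al / x" using x by (simp add: powr_diff)
  have e1: "real k / 2 = al" "real q / 2 = be" "- (real k + real q) / 2 = - (al + be)"
    by (simp_all add: al_def be_def field_simps)
  have KB: "KK * dh (bb x) = (1 / Beta al be) * ((1 - bb x) powr (be - 1) * bb x powr (al - 1))"
  proof -
    have "KK * dh (bb x) = (KK * be / (al + be)) * ((1 - bb x) powr (be - 1) * bb x powr (al - 1))"
      unfolding dh_def by simp
    thus ?thesis unfolding KK_beta .
  qed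
  have pos: "real k powr al > 0" "real q powr al > 0" "real q powr be > 0" "D powr al > 0" "D powr be > 0"
    "x powr al > 0" using kpos qpos D x by auto
  have Bpos: "Beta al be > 0" unfolding Beta_def using al_pos be_pos by auto
  show ?thesis
    unfolding KB unfolding F_density_def e1 u(1) u2 A1 A2 A3 A4 A5 D_def[symmetric] using x pos Bpos kpos qpos D
    by (simp add: field_simps power2_eq_square)
qed

lemma F_density_nonneg: "0 \<le> F_density k q x"
proof -
  have Bpos: "Beta (real k / 2) (real q / 2) > 0" unfolding Beta_def using k1 q1 by auto
  show ?thesis unfolding F_density_def using Bpos by simp
qed

lemma F_density_meas: "F_density k q \<in> borel_measurable borel"
  unfolding F_density_def by measurable

theorem F_tail: "measure (F_dist k q) {x0..} = KK * (gg b + integral {b..1} ff)"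
proof -
  define c where "c = b / 2"
  have c: "0 < c" "c < b" using b0 by (auto simp: c_def)
  define J where "J u = integral {c..u} ff" for u
  have intc: "ff integrable_on {c..1}" using ff_cont[OF c(1)] by (rule integrable_continuous_real)
  have Jd: "(J has_real_derivative ff u) (at u)" if "c < u" "u < 1" for u
  proof -
    have "(J has_vector_derivative ff u) (at u within {c..1})"
      unfolding J_def using that by (intro integral_has_vector_derivative ff_cont c) auto
    thus ?thesis using that by (simp add: at_within_Icc_at has_real_derivative_iff_has_vector_derivative)
  qed
  have Jc: "continuous_on {c..1} J" unfolding J_def by (rule indefinite_integral_continuous_1[OF intc])
  define \<Phi> where "\<Phi> x = KK * (J (bb x) - gg (bb x))" for x
  have deriv: "(\<Phi> has_real_derivative F_density k q x) (at x)" if x: "x0 \<le> x" for x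
  proof -
    have xp: "0 < x" using x0_pos x by simp
    have u: "c < bb x" "bb x < 1" using bb_range[OF x] c by auto
    have u0: "0 < bb x" using u c by simp
    have Hd: "((\<lambda>u. J u - gg u) has_real_derivative (ff (bb x) - (ff (bb x) - dh (bb x)))) (at (bb x))"
      by (intro DERIV_diff Jd gg_deriv u u0)
    have "((\<lambda>x. J (bb x) - gg (bb x)) has_real_derivative
            (ff (bb x) - (ff (bb x) - dh (bb x))) * (real k * real q / (real q + real k * x)^2)) (at x)"
      using DERIV_chain2[OF Hd bb_deriv[OF xp]] by simp
    hence "(\<Phi> has_real_derivative KK * ((ff (bb x) - (ff (bb x) - dh (bb x))) * (real k * real q / (real q + real k * x)^2))) (at x)"
      unfolding \<Phi>_def by (rule DERIV_cmult)
    thus ?thesis using Fdens_eq[OF xp] by (simp add: mult.assoc)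
  qed
  have bblim: "(bb \<longlongrightarrow> 1) at_top"
  proof -
    have "((\<lambda>x. real q / (real q + real k * x)) \<longlongrightarrow> 0) at_top"
    proof (rule tendsto_divide_0[OF tendsto_const])
      show "filterlim (\<lambda>x. real q + real k * x) at_infinity at_top"
        by (rule filterlim_at_top_imp_at_infinity, rule filterlim_tendsto_add_at_top[OF tendsto_const],
            rule filterlim_tendsto_pos_mult_at_top[OF tendsto_const kpos filterlim_ident])
    qed
    hence "((\<lambda>x. 1 - real q / (real q + real k * x)) \<longlongrightarrow> 1 - 0) at_top" by (intro tendsto_intros)
    moreover have "eventually (\<lambda>x. 1 - real q / (real q + real k * x) = bb x) at_top"
      using eventually_gt_at_top[of 0]
    proof eventually_elim
      case (elim x)
      have "0 < real q + real k * x" using Dpos elim by simp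
      thus ?case by (simp add: bb_def field_simps)
    qed
    ultimately show ?thesis by (simp add: tendsto_cong)
  qed
  have ev: "eventually (\<lambda>x. bb x \<in> {c..1}) at_top"
    using eventually_ge_at_top[of x0]
  proof eventually_elim
    case (elim x)
    show ?case using bb_range[OF elim] c by auto
  qed
  have lim: "(\<Phi> \<longlongrightarrow> KK * (J 1 - gg 1)) at_top"
    unfolding \<Phi>_def
    by (intro tendsto_intros continuous_on_tendsto_compose[OF Jc bblim _ ev]
        continuous_on_tendsto_compose[OF gg_cont[OF c(1)] bblim _ ev]) (use c b1 in auto)
  have FTC: "(\<integral>\<^sup>+x. ennreal (F_density k q x) * indicator {x0..} x \<partial>lborel) = KK * (J 1 - gg 1) - \<Phi> x0"
    by (rule nn_integral_FTC_atLeast[OF F_density_meas deriv F_density_nonneg lim])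
  have gg1: "gg 1 = 0" by (simp add: gg_def)
  have comb: "J b + integral {b..1} ff = J 1"
    unfolding J_def by (rule Henstock_Kurzweil_Integration.integral_combine) (use c b1 intc in auto)
  have val: "KK * (J 1 - gg 1) - \<Phi> x0 = KK * (gg b + integral {b..1} ff)"
    unfolding \<Phi>_def bb_x0 gg1 comb[symmetric] by (simp add: algebra_simps)
  have nn: "0 \<le> KK * (gg b + integral {b..1} ff)"
  proof -
    have "0 \<le> integral {b..1} ff"
      using integrable_continuous_real[OF ff_cont[OF b0]] by (rule integral_nonneg) (simp add: ff_nonneg)
    moreover have "0 \<le> gg b" unfolding gg_def using al_pos be_pos by simp
    ultimately show ?thesis using KK_pos by simp
  qed
  have "emeasure (F_dist k q) {x0..} = (\<integral>\<^sup>+x. ennreal (F_density k q x) * indicator {x0..} x \<partial>lborel)"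
    unfolding F_dist_def by (rule emeasure_density) (use F_density_meas in auto)
  hence "emeasure (F_dist k q) {x0..} = ennreal (KK * (gg b + integral {b..1} ff))"
    using FTC val by simp
  thus ?thesis unfolding measure_def using nn by simp
qed

end

definition rho :: "nat \<Rightarrow> real \<Rightarrow> real" where
  "rho k s = (if 0 < s then real k / 2 * unit_ball_vol (real k) * s powr (real k / 2 - 1) else 0)"

lemma rho_nonneg: "0 \<le> rho k s"
  unfolding rho_def by (auto intro!: mult_nonneg_nonneg unit_ball_vol_nonneg)

lemma rho_meas: "rho k \<in> borel_measurable borel"
  unfolding rho_def by measurable

lemma PiE_zero_null:
  assumes "finite I" "I \<noteq> {}"
  shows "emeasure (PiM I (\<lambda>_. lborel)) (PiE I (\<lambda>_. {0::real})) = 0"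
proof -
  interpret product_sigma_finite "\<lambda>_. lborel :: real measure" by standard
  have "emeasure (PiM I (\<lambda>_. lborel)) (PiE I (\<lambda>_. {0::real})) = (\<Prod>i\<in>I. emeasure lborel {0::real})"
    using assms by (intro emeasure_PiM) auto
  also have "\<dots> = 0" using assms by (simp add: card_gt_0_iff)
  finally show ?thesis .
qed

lemma sumsq_le0_null:
  assumes I: "finite I" "I \<noteq> {}" and t: "t \<le> 0"
  shows "emeasure (PiM I (\<lambda>_. lborel)) {x \<in> space (PiM I (\<lambda>_. lborel)). (\<Sum>i\<in>I. (x i)^2) \<le> (t::real)} = 0"
proof -
  have "{x \<in> space (PiM I (\<lambda>_. lborel)). (\<Sum>i\<in>I. (x i)^2) \<le> t} \<subseteq> PiE I (\<lambda>_. {0::real})"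
  proof
    fix x assume x: "x \<in> {x \<in> space (PiM I (\<lambda>_. lborel)). (\<Sum>i\<in>I. (x i)^2) \<le> t}"
    moreover have "0 \<le> (\<Sum>i\<in>I. (x i)^2)" by (simp add: sum_nonneg)
    ultimately have "(\<Sum>i\<in>I. (x i)^2) = 0" using t by auto
    hence "\<forall>i\<in>I. x i = 0" using I by (subst (asm) sum_nonneg_eq_0_iff) auto
    show "x \<in> PiE I (\<lambda>_. {0::real})"
    proof (rule PiE_I)
      fix i assume "i \<in> I" thus "x i \<in> {0}" using \<open>\<forall>i\<in>I. x i = 0\<close> by simp
    next
      fix i assume "i \<notin> I"
      have "x \<in> PiE I (\<lambda>_. UNIV)" using x by (simp add: space_PiM)
      thus "x i = undefined" using \<open>i \<notin> I\<close> by (rule PiE_arb)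
    qed
  qed
  hence "emeasure (PiM I (\<lambda>_. lborel)) {x \<in> space (PiM I (\<lambda>_. lborel)). (\<Sum>i\<in>I. (x i)^2) \<le> t}
       \<le> emeasure (PiM I (\<lambda>_. lborel)) (PiE I (\<lambda>_. {0::real}))"
    by (rule emeasure_mono) (rule sets_PiM_I_finite, use I in auto)
  hence "emeasure (PiM I (\<lambda>_. lborel)) {x \<in> space (PiM I (\<lambda>_. lborel)). (\<Sum>i\<in>I. (x i)^2) \<le> t} \<le> 0"
    using PiE_zero_null[OF I] by simp
  thus ?thesis by simp
qed

lemma sqrt_pow_powr: "0 < t \<Longrightarrow> sqrt t ^ k = t powr (real k / 2)"
proof -
  assume t: "0 < t"
  have "sqrt t ^ k = (t powr (1/2)) ^ k" using t by (simp add: powr_half_sqrt)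
  also have "\<dots> = (t powr (1/2)) powr (real k)" using t by (simp add: powr_realpow)
  also have "\<dots> = t powr (real k / 2)" by (simp add: powr_powr)
  finally show ?thesis .
qed

lemma ball_sumsq:
  assumes I: "finite I" and t: "0 < t"
  shows "emeasure (PiM I (\<lambda>_. lborel)) {x \<in> space (PiM I (\<lambda>_. lborel)). (\<Sum>i\<in>I. (x i)^2) \<le> (t::real)} =
         ennreal (unit_ball_vol (real (card I)) * t powr (real (card I) / 2))"
proof -
  have "{x \<in> space (PiM I (\<lambda>_. lborel)). (\<Sum>i\<in>I. (x i)^2) \<le> t} =
        {f. sqrt (\<Sum>i\<in>I. (f i)\<^sup>2) \<le> sqrt t} \<inter> space (PiM I (\<lambda>_. lborel))" by auto
  moreover have "emeasure (PiM I (\<lambda>_. lborel)) ({f. sqrt (\<Sum>i\<in>I. (f i)\<^sup>2) \<le> sqrt t} \<inter> space (PiM I (\<lambda>_. lborel)))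
      = ennreal (unit_ball_vol (real (card I)) * sqrt t ^ card I)"
    using t I by (intro emeasure_cball_aux) auto
  ultimately show ?thesis using t by (simp add: sqrt_pow_powr)
qed

lemma sets_borel_atMost: "sets (borel :: real measure) = sigma_sets UNIV (range atMost)"
proof -
  have "sets (borel :: real measure) = sets (sigma UNIV (range (\<lambda>a. {..a::real})))"
    by (subst borel_eq_atMost) simp
  also have "\<dots> = sigma_sets UNIV (range atMost)" by (subst sets_measure_of) auto
  finally show ?thesis .
qed

lemma radial_distr:
  assumes I: "finite I" "card I = k" "1 \<le> k"
  shows "distr (PiM I (\<lambda>_. lborel)) borel (\<lambda>x. \<Sum>i\<in>I. (x i)^2) = density lborel (\<lambda>s. ennreal (rho k s))"
proof -
  have Ine: "I \<noteq> {}" using I by auto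
  let ?SS = "\<lambda>x. \<Sum>i\<in>I. (x i)^2 :: real"
  have SSm: "?SS \<in> borel_measurable (PiM I (\<lambda>_. lborel))" by measurable
  have eq_dist: "emeasure (distr (PiM I (\<lambda>_. lborel)) borel ?SS) {..t} =
      (if 0 < t then ennreal (unit_ball_vol (real k) * t powr (real k / 2)) else 0)" for t
  proof -
    have "emeasure (distr (PiM I (\<lambda>_. lborel)) borel ?SS) {..t} =
        emeasure (PiM I (\<lambda>_. lborel)) {x \<in> space (PiM I (\<lambda>_. lborel)). ?SS x \<le> t}"
      by (subst emeasure_distr[OF SSm]) (auto intro: arg_cong[where f="emeasure _"])
    also have "\<dots> = (if 0 < t then ennreal (unit_ball_vol (real k) * t powr (real k / 2)) else 0)"
      using ball_sumsq[OF I(1)] sumsq_le0_null[OF I(1) Ine] I(2) by auto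
    finally show ?thesis .
  qed
  have eq_dens: "emeasure (density lborel (\<lambda>s. ennreal (rho k s))) {..t} =
      (if 0 < t then ennreal (unit_ball_vol (real k) * t powr (real k / 2)) else 0)" for t
  proof -
    have "emeasure (density lborel (\<lambda>s. ennreal (rho k s))) {..t} = (\<integral>\<^sup>+s. ennreal (rho k s) * indicator {..t} s \<partial>lborel)"
      by (rule emeasure_density) (use rho_meas in auto)
    also have "\<dots> = (if 0 < t then ennreal (unit_ball_vol (real k) * t powr (real k / 2)) else 0)"
    proof (cases "0 < t")
      case True
      define a where "a = real k / 2"
      have a: "a > 0" using I by (simp add: a_def)
      have pt: "(\<lambda>s. ennreal (rho k s) * indicator {..t} s) = (\<lambda>s. ennreal (indicator {0..t} s * (a * unit_ball_vol (real k) * s powr (a - 1))))"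
        by (rule ext) (auto simp: rho_def a_def indicator_def)
      have hi: "((\<lambda>s. a * unit_ball_vol (real k) * s powr (a - 1)) has_integral
                 (a * unit_ball_vol (real k) * (t powr (a - 1 + 1) / (a - 1 + 1)))) {0..t}"
        by (intro has_integral_mult_right has_integral_powr_from_0) (use a True in auto)
      have "(\<integral>\<^sup>+s. ennreal (rho k s) * indicator {..t} s \<partial>lborel) =
            ennreal (a * unit_ball_vol (real k) * (t powr (a - 1 + 1) / (a - 1 + 1)))"
        unfolding pt by (rule nn_integral_has_integral_lebesgue[OF _ hi]) (use a in auto)
      also have "\<dots> = ennreal (unit_ball_vol (real k) * t powr (real k / 2))"
        using a by (simp add: a_def)
      finally show ?thesis using True by simp
    next
      case False
      have "(\<lambda>s. ennreal (rho k s) * indicator {..t} s) = (\<lambda>s. 0)"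
        using False by (auto simp: rho_def indicator_def fun_eq_iff)
      thus ?thesis using False by simp
    qed
    finally show ?thesis .
  qed
  show ?thesis
  proof (rule measure_eqI_generator_eq[where \<Omega>=UNIV and E="range atMost" and A="\<lambda>i. {..real i}"])
    show "Int_stable (range atMost :: real set set)"
      by (auto simp: Int_stable_def intro!: image_eqI[where x="min _ _"])
    show "range atMost \<subseteq> Pow (UNIV :: real set)" by simp
    show "\<And>X. X \<in> range atMost \<Longrightarrow> emeasure (distr (PiM I (\<lambda>_. lborel)) borel ?SS) X =
               emeasure (density lborel (\<lambda>s. ennreal (rho k s))) X"
      using eq_dist eq_dens by auto
    show "sets (distr (PiM I (\<lambda>_. lborel)) borel ?SS) = sigma_sets UNIV (range atMost)"
      using sets_borel_atMost by simp
    show "sets (density lborel (\<lambda>s. ennreal (rho k s))) = sigma_sets UNIV (range atMost)"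
      using sets_borel_atMost by simp
    show "range (\<lambda>i. {..real i}) \<subseteq> range atMost" by auto
    show "(\<Union>i. {..real i}) = (UNIV :: real set)"
      by (auto intro: real_arch_simple)
    show "\<And>i. emeasure (distr (PiM I (\<lambda>_. lborel)) borel ?SS) {..real i} \<noteq> \<infinity>"
      using eq_dist by simp
  qed
qed

lemma radial:
  assumes I: "finite I" "card I = k" "1 \<le> k" and h: "h \<in> borel_measurable borel"
  shows "(\<integral>\<^sup>+x. h (\<Sum>i\<in>I. (x i)^2) \<partial>PiM I (\<lambda>_. lborel)) = (\<integral>\<^sup>+s. ennreal (rho k s) * h s \<partial>lborel)"
proof -
  have SSm: "(\<lambda>x. \<Sum>i\<in>I. (x i)^2 :: real) \<in> borel_measurable (PiM I (\<lambda>_. lborel))" by measurable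
  have "(\<integral>\<^sup>+x. h (\<Sum>i\<in>I. (x i)^2) \<partial>PiM I (\<lambda>_. lborel)) =
        (\<integral>\<^sup>+s. h s \<partial>distr (PiM I (\<lambda>_. lborel)) borel (\<lambda>x. \<Sum>i\<in>I. (x i)^2))"
    by (rule nn_integral_distr[symmetric, OF SSm]) (use h in simp)
  also have "\<dots> = (\<integral>\<^sup>+s. h s \<partial>density lborel (\<lambda>s. ennreal (rho k s)))"
    by (simp add: radial_distr[OF I])
  also have "\<dots> = (\<integral>\<^sup>+s. ennreal (rho k s) * h s \<partial>lborel)"
    by (rule nn_integral_density) (use rho_meas h in auto)
  finally show ?thesis .
qed


context FS begin

definition "lam = (1 - b) / b"
definition "gU s = (if 0 < s \<and> s < 1 then unit_ball_vol (real q) * (min (1 - s) (lam * s)) powr be else 0)"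

lemma lam_pos: "0 < lam" unfolding lam_def using b0 b1 by simp

lemma gU_nonneg: "0 \<le> gU s" unfolding gU_def by (auto intro!: mult_nonneg_nonneg unit_ball_vol_nonneg)

lemma gU_meas: "gU \<in> borel_measurable borel" unfolding gU_def by measurable

lemma inner_meas:
  fixes s :: real assumes s: "0 \<le> s"
  shows "emeasure (PiM {k..<k+q} (\<lambda>_. lborel)) {y \<in> space (PiM {k..<k+q} (\<lambda>_. lborel)).
     s + (\<Sum>j\<in>{k..<k+q}. (y j)^2) \<le> 1 \<and> b * (s + (\<Sum>j\<in>{k..<k+q}. (y j)^2)) \<le> s \<and> 0 < s + (\<Sum>j\<in>{k..<k+q}. (y j)^2)}
     = ennreal (gU s)"
proof -
  define J where "J = {k..<k+q}"
  have J: "finite J" "card J = q" "J \<noteq> {}" using q1 by (auto simp: J_def)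
  define M where "M = PiM J (\<lambda>_. lborel :: real measure)"
  define T where "T y = (\<Sum>j\<in>J. (y j)^2)" for y :: "nat \<Rightarrow> real"
  have T0: "0 \<le> T y" for y unfolding T_def by (simp add: sum_nonneg)
  let ?F = "{y \<in> space M. s + T y \<le> 1 \<and> b * (s + T y) \<le> s \<and> 0 < s + T y}"
  have "emeasure M ?F = ennreal (gU s)"
  proof (cases "0 < s \<and> s < 1")
    case True
    define mn where "mn = min (1 - s) (lam * s)"
    have mn: "0 < mn" using True lam_pos by (simp add: mn_def)
    have "?F = {y \<in> space M. T y \<le> mn}"
    proof (intro Collect_cong conj_cong refl)
      fix y
      have "b * (s + T y) \<le> s \<longleftrightarrow> T y \<le> lam * s" unfolding lam_def using b0 b1
        by (simp add: field_simps)
      thus "(s + T y \<le> 1 \<and> b * (s + T y) \<le> s \<and> 0 < s + T y) = (T y \<le> mn)"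
        using True T0[of y] by (auto simp: mn_def)
    qed
    also have "emeasure M \<dots> = ennreal (unit_ball_vol (real q) * mn powr (real q / 2))"
      unfolding M_def T_def using ball_sumsq[OF J(1) mn] J(2) by simp
    finally show ?thesis using True by (simp add: gU_def mn_def be_def)
  next
    case False
    have "?F \<subseteq> {y \<in> space M. T y \<le> 0}"
    proof
      fix y assume y: "y \<in> ?F"
      show "y \<in> {y \<in> space M. T y \<le> 0}"
      proof (cases "s = 0")
        case True thus ?thesis using y b0 T0[of y] by (auto simp: zero_less_mult_iff mult_le_0_iff)
      next
        case False
        hence "1 \<le> s" using \<open>\<not> (0 < s \<and> s < 1)\<close> s by auto
        thus ?thesis using y by auto
      qed
    qed
    hence "emeasure M ?F \<le> emeasure M {y \<in> space M. T y \<le> 0}"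
      by (rule emeasure_mono) (simp add: M_def T_def)
    also have "\<dots> = 0" unfolding M_def T_def by (rule sumsq_le0_null[OF J(1) J(3)]) simp
    finally have "emeasure M ?F = 0" by simp
    moreover have "gU s = 0" unfolding gU_def using False by (rule if_not_P)
    ultimately show ?thesis by simp
  qed
  thus ?thesis by (simp add: M_def T_def J_def)
qed


definition "EE = {x \<in> space (PiM {..<k+q} (\<lambda>_. lborel::real measure)).
   (\<Sum>i<k+q. (x i)^2) \<le> 1 \<and> b * (\<Sum>i<k+q. (x i)^2) \<le> (\<Sum>i<k. (x i)^2) \<and> 0 < (\<Sum>i<k+q. (x i)^2)}"

lemma sumsq_meas:
  assumes "K \<subseteq> I"
  shows "(\<lambda>x. \<Sum>i\<in>K. (x i)^2 :: real) \<in> borel_measurable (PiM I (\<lambda>_. lborel))"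
proof (rule borel_measurable_sum)
  fix i assume "i \<in> K"
  hence "(\<lambda>x. x i :: real) \<in> borel_measurable (PiM I (\<lambda>_. lborel))"
    using assms measurable_component_singleton[of i I "\<lambda>_. lborel :: real measure"] by auto
  thus "(\<lambda>x. (x i)^2 :: real) \<in> borel_measurable (PiM I (\<lambda>_. lborel))" by measurable
qed

lemma EE_sets: "EE \<in> sets (PiM {..<k+q} (\<lambda>_. lborel))"
proof -
  have m1: "(\<lambda>x. \<Sum>i<k+q. (x i)^2 :: real) \<in> borel_measurable (PiM {..<k+q} (\<lambda>_. lborel))"
    and m2: "(\<lambda>x. \<Sum>i<k. (x i)^2 :: real) \<in> borel_measurable (PiM {..<k+q} (\<lambda>_. lborel))"
    by (rule sumsq_meas, simp)+
  have m3: "(\<lambda>x. b * (\<Sum>i<k+q. (x i)^2 :: real)) \<in> borel_measurable (PiM {..<k+q} (\<lambda>_. lborel))"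
    using m1 by (rule borel_measurable_times[OF borel_measurable_const])
  show ?thesis unfolding EE_def
    by (intro sets.sets_Collect_conj borel_measurable_le borel_measurable_less m1 m2 m3 borel_measurable_const)
qed

lemma EE_meas: "emeasure (PiM {..<k+q} (\<lambda>_. lborel)) EE = (\<integral>\<^sup>+s. ennreal (rho k s) * ennreal (gU s) \<partial>lborel)"
proof -
  interpret product_sigma_finite "\<lambda>_. lborel :: real measure" by standard
  define I where "I = {..<k}"
  define J where "J = {k..<k+q}"
  have IJ: "I \<inter> J = {}" "finite I" "finite J" "I \<union> J = {..<k+q}" by (auto simp: I_def J_def)
  have "emeasure (PiM {..<k+q} (\<lambda>_. lborel)) EE = (\<integral>\<^sup>+x. indicator EE x \<partial>PiM (I \<union> J) (\<lambda>_. lborel))"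
    using EE_sets by (simp add: IJ(4))
  also have "\<dots> = (\<integral>\<^sup>+x. (\<integral>\<^sup>+y. indicator EE (merge I J (x,y)) \<partial>PiM J (\<lambda>_. lborel)) \<partial>PiM I (\<lambda>_. lborel))"
    by (rule product_nn_integral_fold[OF IJ(1-3)]) (use EE_sets IJ(4) in simp)
  also have "\<dots> = (\<integral>\<^sup>+x. ennreal (gU (\<Sum>i\<in>I. (x i)^2)) \<partial>PiM I (\<lambda>_. lborel))"
  proof (rule nn_integral_cong)
    fix x assume x: "x \<in> space (PiM I (\<lambda>_. lborel :: real measure))"
    define s where "s = (\<Sum>i\<in>I. (x i)^2)"
    have s0: "0 \<le> s" by (simp add: s_def sum_nonneg)
    let ?F = "{y \<in> space (PiM J (\<lambda>_. lborel :: real measure)). s + (\<Sum>j\<in>J. (y j)^2) \<le> 1 \<and>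
       b * (s + (\<Sum>j\<in>J. (y j)^2)) \<le> s \<and> 0 < s + (\<Sum>j\<in>J. (y j)^2)}"
    have "(\<integral>\<^sup>+y. indicator EE (merge I J (x,y)) \<partial>PiM J (\<lambda>_. lborel)) = (\<integral>\<^sup>+y. indicator ?F y \<partial>PiM J (\<lambda>_. lborel))"
    proof (rule nn_integral_cong)
      fix y assume y: "y \<in> space (PiM J (\<lambda>_. lborel :: real measure))"
      have mem: "merge I J (x,y) \<in> space (PiM {..<k+q} (\<lambda>_. lborel :: real measure))"
        using x y IJ(1) unfolding IJ(4)[symmetric] by (simp add: space_PiM PiE_iff)
      have s1: "(\<Sum>i<k+q. (merge I J (x,y) i)^2) = s + (\<Sum>j\<in>J. (y j)^2)"
      proof -
        have "(\<Sum>i<k+q. (merge I J (x,y) i)^2) = (\<Sum>i\<in>I. (merge I J (x,y) i)^2) + (\<Sum>i\<in>J. (merge I J (x,y) i)^2)"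
          unfolding IJ(4)[symmetric] by (rule sum.union_disjoint[OF IJ(2,3,1)])
        also have "(\<Sum>i\<in>I. (merge I J (x,y) i)^2) = s" unfolding s_def
          by (rule sum.cong) (use IJ(1) in auto)
        also have "(\<Sum>i\<in>J. (merge I J (x,y) i)^2) = (\<Sum>j\<in>J. (y j)^2)"
          by (rule sum.cong) (use IJ(1) in auto)
        finally show ?thesis .
      qed
      have s2: "(\<Sum>i<k. (merge I J (x,y) i)^2) = s"
        unfolding s_def I_def[symmetric] by (rule sum.cong) (use IJ(1) in auto)
      have "merge I J (x,y) \<in> EE \<longleftrightarrow> y \<in> ?F" using mem y by (simp add: EE_def s1 s2)
      thus "indicator EE (merge I J (x,y)) = (indicator ?F y :: ennreal)"
        by (simp add: indicator_def)
    qed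
    also have "\<dots> = emeasure (PiM J (\<lambda>_. lborel)) ?F"
      by (rule nn_integral_indicator) measurable
    also have "\<dots> = ennreal (gU s)" using inner_meas[OF s0] by (simp add: J_def)
    finally show "(\<integral>\<^sup>+y. indicator EE (merge I J (x,y)) \<partial>PiM J (\<lambda>_. lborel)) = ennreal (gU (\<Sum>i\<in>I. (x i)^2))"
      by (simp add: s_def)
  qed
  also have "\<dots> = (\<integral>\<^sup>+s. ennreal (rho k s) * ennreal (gU s) \<partial>lborel)"
    by (rule radial) (use k1 gU_meas in \<open>auto simp: I_def\<close>)
  finally show ?thesis .
qed


lemma rho_gU_eq:
  defines "C0 \<equiv> al * unit_ball_vol (real k) * unit_ball_vol (real q)"
  shows "rho k s * gU s = indicator {0..b} s * (C0 * lam powr be * s powr (al + be - 1))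
                         + indicator {b<..1} s * (C0 * ff s)"
proof -
  have rk: "rho k s = (if 0 < s then al * unit_ball_vol (real k) * s powr (al - 1) else 0)"
    by (simp add: rho_def al_def)
  consider "s \<le> 0" | "0 < s" "s \<le> b" | "b < s" "s < 1" | "1 \<le> s" by linarith
  thus ?thesis
  proof cases
    case 1
    thus ?thesis using b0 by (cases "s = 0") (auto simp: rho_def indicator_def)
  next
    case 2
    have s1: "s < 1" using 2 b1 by simp
    have "lam * s \<le> 1 - s" unfolding lam_def using 2 b0 b1 by (simp add: field_simps)
    hence mn: "min (1 - s) (lam * s) = lam * s" by simp
    have "rho k s * gU s = al * unit_ball_vol (real k) * s powr (al - 1) * (unit_ball_vol (real q) * (lam * s) powr be)"
      using 2 s1 by (simp add: rk gU_def mn)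
    also have "\<dots> = C0 * lam powr be * (s powr (al - 1) * s powr be)"
      using 2 lam_pos by (simp add: powr_mult C0_def mult_ac)
    also have "s powr (al - 1) * s powr be = s powr (al + be - 1)"
      by (simp add: powr_add[symmetric] algebra_simps)
    finally show ?thesis using 2 by (simp add: indicator_def)
  next
    case 3
    have "1 - s \<le> lam * s" unfolding lam_def using 3 b0 b1 by (simp add: field_simps)
    hence mn: "min (1 - s) (lam * s) = 1 - s" by simp
    have g: "gU s = unit_ball_vol (real q) * (1 - s) powr be" using 3 b0 b1 by (simp add: gU_def mn)
    have "rho k s * gU s = C0 * ff s"
      using 3 b0 by (simp add: rk g ff_def C0_def mult_ac)
    thus ?thesis using 3 by (simp add: indicator_def)
  next
    case 4
    have g: "gU s = 0" using 4 by (simp add: gU_def)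
    show ?thesis
    proof (cases "s = 1")
      case True thus ?thesis using b1 g by (simp add: indicator_def ff_def)
    next
      case False thus ?thesis using 4 b1 by (simp add: g indicator_def)
    qed
  qed
qed

lemma integral_gU:
  "(\<integral>\<^sup>+s. ennreal (rho k s) * ennreal (gU s) \<partial>lborel) =
   ennreal (al * unit_ball_vol (real k) * unit_ball_vol (real q) * (lam powr be * (b powr (al + be) / (al + be)) + integral {b..1} ff))"
proof -
  define C0 where "C0 = al * unit_ball_vol (real k) * unit_ball_vol (real q)"
  have C0: "0 \<le> C0" unfolding C0_def using al_pos by (auto intro!: mult_nonneg_nonneg unit_ball_vol_nonneg)
  define p1 where "p1 s = indicator {0..b} s * (C0 * lam powr be * s powr (al + be - 1))" for s :: real
  define p2 where "p2 s = indicator {b<..1} s * (C0 * ff s)" for s :: real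
  have p1n: "0 \<le> p1 s" for s unfolding p1_def using C0 by simp
  have p2n: "0 \<le> p2 s" for s unfolding p2_def using C0 ff_nonneg by simp
  have pw: "ennreal (rho k s) * ennreal (gU s) = ennreal (p1 s) + ennreal (p2 s)" for s
  proof -
    have "ennreal (rho k s) * ennreal (gU s) = ennreal (rho k s * gU s)"
      using rho_nonneg gU_nonneg by (simp add: ennreal_mult)
    also have "\<dots> = ennreal (p1 s + p2 s)" using rho_gU_eq by (simp add: p1_def p2_def C0_def)
    also have "\<dots> = ennreal (p1 s) + ennreal (p2 s)" using p1n p2n by (simp add: ennreal_plus)
    finally show ?thesis .
  qed
  have m1: "p1 \<in> borel_measurable borel" unfolding p1_def by measurable
  have m2: "p2 \<in> borel_measurable borel" unfolding p2_def ff_def by measurable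
  have "(\<integral>\<^sup>+s. ennreal (rho k s) * ennreal (gU s) \<partial>lborel) = (\<integral>\<^sup>+s. ennreal (p1 s) + ennreal (p2 s) \<partial>lborel)"
    by (simp add: pw)
  also have "\<dots> = (\<integral>\<^sup>+s. ennreal (p1 s) \<partial>lborel) + (\<integral>\<^sup>+s. ennreal (p2 s) \<partial>lborel)"
    by (rule nn_integral_add) (use m1 m2 in auto)
  also have "(\<integral>\<^sup>+s. ennreal (p1 s) \<partial>lborel) = ennreal (C0 * lam powr be * (b powr (al + be - 1 + 1) / (al + be - 1 + 1)))"
  proof -
    have hi: "((\<lambda>s. C0 * lam powr be * s powr (al + be - 1)) has_integral
             (C0 * lam powr be * (b powr (al + be - 1 + 1) / (al + be - 1 + 1)))) {0..b}"
      by (intro has_integral_mult_right has_integral_powr_from_0) (use al_pos be_pos b0 in auto)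
    show ?thesis unfolding p1_def
      by (rule nn_integral_has_integral_lebesgue[OF _ hi]) (use C0 lam_pos in auto)
  qed
  also have "(\<integral>\<^sup>+s. ennreal (p2 s) \<partial>lborel) = (\<integral>\<^sup>+s. ennreal (indicator {b..1} s * (C0 * ff s)) \<partial>lborel)"
  proof (rule nn_integral_cong_AE)
    show "AE s in lborel. ennreal (p2 s) = ennreal (indicator {b..1} s * (C0 * ff s))"
      using AE_lborel_singleton[of b] by eventually_elim (auto simp: p2_def indicator_def)
  qed
  also have "\<dots> = ennreal (C0 * integral {b..1} ff)"
  proof -
    have hi2: "((\<lambda>s. C0 * ff s) has_integral (C0 * integral {b..1} ff)) {b..1}"
      by (intro has_integral_mult_right integrable_integral integrable_continuous_real ff_cont b0)
    show ?thesis by (rule nn_integral_has_integral_lebesgue[OF _ hi2]) (use C0 ff_nonneg in auto)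
  qed
  also have "ennreal (C0 * lam powr be * (b powr (al + be - 1 + 1) / (al + be - 1 + 1))) + ennreal (C0 * integral {b..1} ff)
     = ennreal (C0 * (lam powr be * (b powr (al + be) / (al + be)) + integral {b..1} ff))"
  proof -
    have i0: "0 \<le> integral {b..1} ff"
      using integrable_continuous_real[OF ff_cont[OF b0]] by (rule integral_nonneg) (simp add: ff_nonneg)
    have a0: "0 \<le> C0 * lam powr be * (b powr (al + be - 1 + 1) / (al + be - 1 + 1))"
      using C0 al_pos be_pos by simp
    have i0': "0 \<le> C0 * integral {b..1} ff" using i0 C0 by simp
    have "ennreal (C0 * lam powr be * (b powr (al + be - 1 + 1) / (al + be - 1 + 1))) + ennreal (C0 * integral {b..1} ff)
        = ennreal (C0 * lam powr be * (b powr (al + be - 1 + 1) / (al + be - 1 + 1)) + C0 * integral {b..1} ff)"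
      by (rule ennreal_plus[OF a0 i0', symmetric])
    also have "C0 * lam powr be * (b powr (al + be - 1 + 1) / (al + be - 1 + 1)) + C0 * integral {b..1} ff
        = C0 * (lam powr be * (b powr (al + be) / (al + be)) + integral {b..1} ff)"
      by (simp add: distrib_left)
    finally show ?thesis .
  qed
  finally show ?thesis by (simp add: C0_def)
qed


lemma nrm_meas:
  assumes "K \<le> N"
  shows "(\<lambda>x. nrm K x) \<in> borel_measurable (PiM {..<N} (\<lambda>_. lborel))"
proof -
  have "(\<lambda>x. \<Sum>i\<in>{..<K}. (x i)^2 :: real) \<in> borel_measurable (PiM {..<N} (\<lambda>_. lborel))"
    by (rule sumsq_meas) (use assms in auto)
  hence "(\<lambda>x. sqrt (\<Sum>i\<in>{..<K}. (x i)^2 :: real)) \<in> borel_measurable (PiM {..<N} (\<lambda>_. lborel))"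
    by measurable
  thus ?thesis by (simp add: nrm_def ipn_def power2_eq_square)
qed

theorem U_tail:
  "measure (unif_sphere (k+q)) {ut \<in> space (unif_sphere (k+q)). sqrt b \<le> nrm k ut} = KK * (gg b + integral {b..1} ff)"
proof -
  define L where "L = PiM {..<k+q} (\<lambda>_. lborel :: real measure)"
  define Bl where "Bl = {x \<in> space L. nrm (k+q) x \<le> 1}"
  define Nm where "Nm = (\<lambda>x::nat\<Rightarrow>real. restrict (\<lambda>i. x i / nrm (k+q) x) {..<k+q})"
  define S where "S = {ut \<in> space L. sqrt b \<le> nrm k ut}"
  have U: "unif_sphere (k+q) = distr (uniform_measure L Bl) L Nm"
    unfolding unif_sphere_def Leb_def L_def Bl_def Nm_def ..
  have nm: "(\<lambda>x. nrm (k+q) x) \<in> borel_measurable L" unfolding L_def by (rule nrm_meas) simp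
  have nk: "(\<lambda>x. nrm k x) \<in> borel_measurable L" unfolding L_def by (rule nrm_meas) simp
  have Blm: "Bl \<in> sets L" unfolding Bl_def using nm by measurable
  have Sm: "S \<in> sets L" unfolding S_def using nk by measurable
  have NmL: "Nm \<in> L \<rightarrow>\<^sub>M L" unfolding Nm_def
  proof (subst (2) L_def, rule measurable_restrict)
    fix i assume i: "i \<in> {..<k+q}"
    have "(\<lambda>x. x i) \<in> borel_measurable L"
      unfolding L_def using measurable_component_singleton[OF i, of "\<lambda>_. lborel :: real measure"] by simp
    thus "(\<lambda>x. x i / nrm (k+q) x) \<in> L \<rightarrow>\<^sub>M lborel" using nm by simp
  qed
  have NmU: "Nm \<in> uniform_measure L Bl \<rightarrow>\<^sub>M L"
    using NmL by (simp add: uniform_measure_def measurable_cong_sets[OF sets_density refl])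
  have sU: "space (uniform_measure L Bl) = space L" by (simp add: uniform_measure_def)
  have "emeasure (unif_sphere (k+q)) S = emeasure (uniform_measure L Bl) (Nm -` S \<inter> space L)"
    unfolding U by (subst emeasure_distr[OF NmU Sm]) (simp add: sU)
  also have "\<dots> = emeasure L (Bl \<inter> (Nm -` S \<inter> space L)) / emeasure L Bl"
    by (rule emeasure_uniform_measure[OF Blm]) (use NmL Sm in \<open>auto intro: measurable_sets\<close>)
  also have "Bl \<inter> (Nm -` S \<inter> space L) = EE"
  proof (rule Set.set_eqI)
    fix x :: "nat \<Rightarrow> real"
    define Sq where "Sq = (\<Sum>i<k+q. (x i)^2)"
    define Sk where "Sk = (\<Sum>i<k. (x i)^2)"
    have Sq0: "0 \<le> Sq" by (simp add: Sq_def sum_nonneg)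
    have n1: "nrm (k+q) x = sqrt Sq" by (simp add: nrm_def ipn_def Sq_def power2_eq_square)
    have NmS: "Nm x \<in> space L" by (simp add: Nm_def L_def space_PiM)
    have "ipn k (Nm x) (Nm x) = (\<Sum>i<k. (x i / sqrt Sq) * (x i / sqrt Sq))"
      unfolding ipn_def Nm_def n1 by (rule sum.cong) auto
    also have "\<dots> = (\<Sum>i<k. (x i)^2) / (sqrt Sq * sqrt Sq)"
      by (simp add: sum_divide_distrib power2_eq_square)
    also have "\<dots> = Sk / Sq" using Sq0 by (simp add: Sk_def)
    finally have n2: "nrm k (Nm x) = sqrt (Sk / Sq)" by (simp add: nrm_def)
    have "x \<in> Bl \<inter> (Nm -` S \<inter> space L) \<longleftrightarrow> x \<in> space L \<and> Sq \<le> 1 \<and> b \<le> Sk / Sq"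
      unfolding Bl_def S_def using NmS by (auto simp: n1 n2)
    also have "\<dots> \<longleftrightarrow> x \<in> space L \<and> Sq \<le> 1 \<and> b * Sq \<le> Sk \<and> 0 < Sq"
    proof (cases "Sq = 0")
      case True thus ?thesis using b0 by simp
    next
      case False
      hence "0 < Sq" using Sq0 by simp
      thus ?thesis by (simp add: pos_le_divide_eq mult.commute)
    qed
    also have "\<dots> \<longleftrightarrow> x \<in> EE" by (simp add: EE_def L_def Sq_def Sk_def)
    finally show "x \<in> Bl \<inter> (Nm -` S \<inter> space L) \<longleftrightarrow> x \<in> EE" .
  qed
  also have "emeasure L EE = ennreal (al * unit_ball_vol (real k) * unit_ball_vol (real q) *
      (lam powr be * (b powr (al + be) / (al + be)) + integral {b..1} ff))"
    unfolding L_def EE_meas integral_gU ..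
  also have "emeasure L Bl = ennreal (unit_ball_vol (real (k+q)))"
  proof -
    have "Bl = {x \<in> space L. (\<Sum>i\<in>{..<k+q}. (x i)^2) \<le> 1}"
      unfolding Bl_def by (simp add: nrm_def ipn_def power2_eq_square)
    thus ?thesis unfolding L_def using ball_sumsq[of "{..<k+q}" 1] by simp
  qed
  also have "lam powr be * (b powr (al + be) / (al + be)) = gg b"
  proof -
    have "lam powr be * b powr (al + be) = (1 - b) powr be * b powr al"
      unfolding lam_def using b0 b1 by (simp add: powr_divide powr_add field_simps)
    thus ?thesis unfolding gg_def by simp
  qed
  finally have "emeasure (unif_sphere (k+q)) S = ennreal (al * unit_ball_vol (real k) * unit_ball_vol (real q) *
      (gg b + integral {b..1} ff)) / ennreal (unit_ball_vol (real (k+q)))" .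
  also have "\<dots> = ennreal (KK * (gg b + integral {b..1} ff))"
  proof -
    have i0: "0 \<le> integral {b..1} ff"
      using integrable_continuous_real[OF ff_cont[OF b0]] by (rule integral_nonneg) (simp add: ff_nonneg)
    have g0: "0 \<le> gg b" unfolding gg_def using al_pos be_pos by simp
    have "0 \<le> al * unit_ball_vol (real k) * unit_ball_vol (real q) * (gg b + integral {b..1} ff)"
      using i0 g0 al_pos by (auto intro!: mult_nonneg_nonneg unit_ball_vol_nonneg)
    thus ?thesis by (subst divide_ennreal) (auto simp: KK_def)
  qed
  finally have "emeasure (unif_sphere (k+q)) S = ennreal (KK * (gg b + integral {b..1} ff))" .
  moreover have "0 \<le> KK * (gg b + integral {b..1} ff)"
  proof -
    have i0: "0 \<le> integral {b..1} ff"
      using integrable_continuous_real[OF ff_cont[OF b0]] by (rule integral_nonneg) (simp add: ff_nonneg)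
    have g0: "0 \<le> gg b" unfolding gg_def using al_pos be_pos by simp
    show ?thesis using KK_pos i0 g0 by simp
  qed
  moreover have "{ut \<in> space (unif_sphere (k+q)). sqrt b \<le> nrm k ut} = S"
    unfolding S_def U by simp
  ultimately show ?thesis unfolding measure_def by simp
qed

end

lemma nrm_cong: "(\<And>a. a < k \<Longrightarrow> f a = g a) \<Longrightarrow> nrm k f = nrm k g"
  unfolding nrm_def by (rule arg_cong[where f=sqrt], rule ipn_cong) auto

lemma unit_AE_nonzero:
  assumes w: "ipn n w w = 1" and \<sigma>: "0 < \<sigma>"
  shows "AE y in gauss n \<mu> \<sigma>. ipn n w y \<noteq> 0"
proof -
  have "\<exists>j<n. w j \<noteq> 0"
  proof (rule ccontr)
    assume "\<not> (\<exists>j<n. w j \<noteq> 0)"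
    hence "ipn n w w = 0" by (simp add: ipn_def)
    with w show False by simp
  qed
  then obtain j where j: "j < n" "w j \<noteq> 0" by blast
  show ?thesis by (rule gauss_hyperplane_null[where w=w, OF j \<sigma>])
qed

hide_const (open) Matrix.col

theorem lemmaC2:
  fixes n d k :: nat and X V :: "nat \<Rightarrow> nat \<Rightarrow> real" and \<beta> :: "nat \<Rightarrow> real" and \<sigma> :: real
  assumes "d < n" and "1 \<le> k" and "k < d"
    and "full_col_rank n d X"
    and "0 < \<sigma>"
    and V_orthonormal: "\<forall>a < n - d + k. \<forall>b < n - d + k.
           ipn n (col V a) (col V b) = (if a = b then 1 else 0)"
    and V_span: "colspace n V {..<n - d + k} = orth_compl n (colspace n X {k..<d})"
    and V_first: "\<forall>i<k. \<forall>r<n. V r i =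
           (X r i - proj n X {Suc i..<d} (col X i) r)
             / nrm n (\<lambda>s. X s i - proj n X {Suc i..<d} (col X i) s)"
  shows "AE y in gauss n (\<lambda>i. \<Sum>j<d. X i j * \<beta> j) \<sigma>.
    (let m = n - d + k;
         Fstat = (\<lambda>z. ((nrm n (\<lambda>i. z i - proj n X {k..<d} z i))\<^sup>2
                        - (nrm n (\<lambda>i. z i - proj n X {..<d} z i))\<^sup>2) / real k
                       / ((nrm n (\<lambda>i. z i - proj n X {..<d} z i))\<^sup>2 / real (n - d)));
         pF = measure (F_dist k (n - d)) {Fstat y..};
         yhat = proj n X {k..<d} y;
         sighat = nrm n (\<lambda>i. y i - yhat i);
         u = (\<lambda>a. (\<Sum>i<n. V i a * (y i - yhat i)) / sighat);
         ytil = (\<lambda>ut. (\<lambda>i. yhat i + sighat * (\<Sum>a<m. V i a * ut a)));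
         T = (\<lambda>z. nrm k (\<lambda>a. \<Sum>i<n. V i a * (\<Sum>j<k. X i j * ols n d X z j)));
         U = unif_sphere m
     in pF = measure U {ut \<in> space U. T (ytil ut) \<ge> T y}
      \<and> pF = measure U {ut \<in> space U. nrm k ut \<ge> nrm k u})"
proof -
  interpret LM n d k X V
    by (rule LM.intro[OF assms(1-4) assms(6-8)])
  define q where "q = n - d"
  have q1: "1 \<le> q" using assms(1) by (simp add: q_def)
  have mq: "n - d + k = k + q" by (simp add: q_def)
  have ae0: "AE y in gauss n (\<lambda>i. \<Sum>j<d. X i j * \<beta> j) \<sigma>. ipn n (Defs.col V 0) y \<noteq> 0"
  proof (rule unit_AE_nonzero[OF _ assms(5)])
    show "ipn n (Defs.col V 0) (Defs.col V 0) = 1" using V_orthonormal km by simp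
  qed
  have ae1: "AE y in gauss n (\<lambda>i. \<Sum>j<d. X i j * \<beta> j) \<sigma>. ipn n (Defs.col V (n - d + k - 1)) y \<noteq> 0"
  proof (rule unit_AE_nonzero[OF _ assms(5)])
    have "n - d + k - 1 < n - d + k" using km by simp
    thus "ipn n (Defs.col V (n - d + k - 1)) (Defs.col V (n - d + k - 1)) = 1" using V_orthonormal by simp
  qed
  show ?thesis
    using ae0 ae1
  proof eventually_elim
    case (elim y)
    define zz where "zz a = ipn n (Defs.col V a) y" for a
    define A where "A = (\<Sum>a<k. (zz a)^2)"
    define C where "C = (\<Sum>a\<in>{k..<n - d + k}. (zz a)^2)"
    define yhat where "yhat = proj n X {k..<d} y"
    define T where "T = (\<lambda>z. nrm k (\<lambda>a. \<Sum>i<n. V i a * (\<Sum>j<k. X i j * ols n d X z j)))"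
    note KL = key_linear[of y, folded zz_def, folded A_def C_def yhat_def T_def]
    have Apos: "0 < A"
    proof -
      have "(zz 0)^2 \<le> A" unfolding A_def using assms(2)
        by (intro member_le_sum) auto
      moreover have "0 < (zz 0)^2" using elim(1) by (simp add: zz_def)
      ultimately show ?thesis by linarith
    qed
    have Cpos: "0 < C"
    proof -
      have "(zz (n - d + k - 1))^2 \<le> C" unfolding C_def using km
        by (intro member_le_sum) auto
      moreover have "0 < (zz (n - d + k - 1))^2" using elim(2) by (simp add: zz_def)
      ultimately show ?thesis by linarith
    qed
    define Bq where "Bq = A / (A + C)"
    have Bq: "0 < Bq" "Bq < 1" using Apos Cpos by (auto simp: Bq_def)
    interpret FS k q Bq using assms(2) q1 Bq by unfold_locales auto
    have sig: "nrm n (\<lambda>i. y i - yhat i) = sqrt (A + C)" by (rule KL(1))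
    have s0: "0 < sqrt (A + C)" using Apos Cpos by simp
    have Fst: "((nrm n (\<lambda>i. y i - proj n X {k..<d} y i))\<^sup>2 - (nrm n (\<lambda>i. y i - proj n X {..<d} y i))\<^sup>2) / real k
                 / ((nrm n (\<lambda>i. y i - proj n X {..<d} y i))\<^sup>2 / real (n - d)) = x0"
    proof -
      have "(nrm n (\<lambda>i. y i - proj n X {k..<d} y i))\<^sup>2 = A + C"
        using KL(1) Apos Cpos by (simp add: yhat_def)
      moreover have "(nrm n (\<lambda>i. y i - proj n X {..<d} y i))\<^sup>2 = C" using KL(2) Cpos by simp
      moreover have "1 - A / (A + C) = C / (A + C)"
      proof -
        have ACp: "A + C \<noteq> 0" using Apos Cpos by simp
        thus ?thesis by (simp add: field_simps)
      qed
      moreover have "A / (A + C) / (C / (A + C)) = A / C"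
      proof -
        have ACp: "A + C \<noteq> 0" using Apos Cpos by simp
        have "A / (A + C) / (C / (A + C)) = (A * (A + C)) / ((A + C) * C)" by (rule divide_divide_times_eq)
        also have "\<dots> = ((A + C) * A) / ((A + C) * C)" by (simp only: mult.commute)
        also have "\<dots> = A / C" using ACp by (rule nonzero_mult_divide_mult_cancel_left)
        finally show ?thesis .
      qed
      moreover have "(A + C - C) / real k / (C / real q) = real q / real k * (A / C)"
        using Apos Cpos assms(2) q1 by (simp add: field_simps)
      ultimately show ?thesis unfolding x0_def unfolding Bq_def q_def[symmetric] using Apos Cpos by simp
    qed
    have uu: "nrm k (\<lambda>a. (\<Sum>i<n. V i a * (y i - yhat i)) / nrm n (\<lambda>i. y i - yhat i)) = sqrt Bq"
    proof -
      have "nrm k (\<lambda>a. (\<Sum>i<n. V i a * (y i - yhat i)) / nrm n (\<lambda>i. y i - yhat i)) =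
            nrm k (\<lambda>a. (1 / sqrt (A + C)) * zz a)"
        unfolding sig by (rule nrm_cong) (use KL(3) in simp)
      also have "\<dots> = \<bar>1 / sqrt (A + C)\<bar> * nrm k zz" by (rule nrm_scale)
      also have "nrm k zz = sqrt A" by (simp add: nrm_def ipn_def A_def power2_eq_square)
      also have "\<bar>1 / sqrt (A + C)\<bar> * sqrt A = sqrt A / sqrt (A + C)" using s0 by simp
      also have "\<dots> = sqrt Bq" by (simp add: Bq_def real_sqrt_divide)
      finally show ?thesis .
    qed
    have set1: "{ut \<in> space (unif_sphere (n - d + k)).
        T y \<le> T (\<lambda>i. yhat i + nrm n (\<lambda>i. y i - yhat i) * (\<Sum>a<n - d + k. V i a * ut a))}
        = {ut \<in> space (unif_sphere (k + q)). sqrt Bq \<le> nrm k ut}"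
    proof -
      have "T y \<le> T (\<lambda>i. yhat i + nrm n (\<lambda>i. y i - yhat i) * (\<Sum>a<n - d + k. V i a * ut a)) \<longleftrightarrow> sqrt Bq \<le> nrm k ut" for ut
      proof -
        have "T (\<lambda>i. yhat i + nrm n (\<lambda>i. y i - yhat i) * (\<Sum>a<n - d + k. V i a * ut a)) = sqrt (A + C) * nrm k ut"
          using KL(4) sig s0 by (simp add: T_def)
        moreover have "T y = sqrt A" using KL(5) by (simp add: T_def)
        moreover have "sqrt A \<le> sqrt (A + C) * t \<longleftrightarrow> sqrt Bq \<le> t" for t
          using s0 by (simp add: Bq_def real_sqrt_divide pos_divide_le_eq mult.commute)
        ultimately show ?thesis by simp
      qed
      thus ?thesis unfolding mq by simp
    qed
    have set2: "{ut \<in> space (unif_sphere (n - d + k)).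
        nrm k (\<lambda>a. (\<Sum>i<n. V i a * (y i - yhat i)) / nrm n (\<lambda>i. y i - yhat i)) \<le> nrm k ut}
        = {ut \<in> space (unif_sphere (k + q)). sqrt Bq \<le> nrm k ut}"
      unfolding uu mq ..
    have main: "measure (F_dist k q) {x0..} = measure (unif_sphere (k + q)) {ut \<in> space (unif_sphere (k + q)). sqrt Bq \<le> nrm k ut}"
      using F_tail U_tail by simp
    show ?case
      unfolding Let_def Fst[unfolded yhat_def] set1[unfolded yhat_def T_def] set2[unfolded yhat_def]
      using main by (simp add: q_def add.commute[of "n - d" k])
  qed
qed

end
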